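(* Let $l\ge1$, $n\ge1$, $\mu>0$, $1\le p<\infty$, $0<q\le\infty$, and let $H$ be a traceless Hermitian observable on $n$ qubits. Let $\mathcal C_{\hat\mu_{p,q}\le\mu}$ be the set of depth-$l$ circuits $\vec C_l=(\Phi_l,\dots,\Phi_1)$ of unital quantum channels on $n$ qubits with $\hat\mu_{p,q}(\vec C_l)\le\mu$, and $N=4^n-1$. Then for every sample $S=(\vec x_1,\dots,\vec x_m)$: (1) if $1\le p\le2$, $R_S(\mathcal F\circ\mathcal C_{\hat\mu_{p,q}\le\mu})\le\mu N^{l\max\{1/p^*,1/q\}}\frac{\sqrt{\min\{p^*,8n\}}}{\sqrt m}\hat K_p(S,H)$; (2) if $2<p<\infty$, $R_S(\mathcal F\circ\mathcal C_{\hat\mu_{p,q}\le\mu})\le\mu N^{l\max\{1/p^*,1/q\}}\frac{\sqrt{p^*}}{m^{1/p}}\hat K_p(S,H)$.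
   Context: Pauli notation $P_{\vec z}$ as tensor products of $P_0=\mathbb I,P_1=X,P_2=Y,P_3=Z$; $\vec0$ the all-zero string. Representation matrix: $M^\Phi_{\vec z\vec x}=2^{-n}\mathrm{Tr}(P_{\vec z}\Phi(P_{\vec x}))$; for unital $\Phi$ ($\Phi(\mathbb I)=\mathbb I$), $\hat M^\Phi$ is the submatrix with rows and columns indexed by strings $\ne\vec0$. Group norm: $\|M\|_{p,q}=(\frac1{N_1}\sum_i\|M_i\|_p^q)^{1/q}$ for an $N_1\times N_2$ matrix with rows $M_i$ ($\max_i\|M_i\|_p$ if $q=\infty$). $p^*$ is the Hölder conjugate. $\hat\mu_{p,q}(\vec C_l)=\prod_{i=1}^l\|\hat M^{\Phi_i}\|_{p,q}$. $C_l=\Phi_l\circ\cdots\circ\Phi_1$, $f_{\vec C_l}(\vec x)=\mathrm{Tr}(C_l(\rho(\vec x))H)$ with $\rho(\vec x)$ an $n$-qubit pure state encoding $\vec x$; $R_S(\mathcal G)=\mathbb E_{\vec\epsilon}\frac1m\sup_{g\in\mathcal G}|\sum_i\epsilon_ig(\vec x_i)|$ with i.i.d. uniform signs. $\hat{\vec\alpha}\in\mathbb R^N$ has entries $\mathrm{Tr}(P_{\vec z}H)$, $\hat{\vec f}_I(\vec x)\in\mathbb R^N$ has entries $2^{-n}\mathrm{Tr}(P_{\vec z}\rho(\vec x))$ (indices $\vec z\ne\vec0$), $\hat K_p(S,H)=\|\hat{\vec\alpha}\|_p\max_i\|\hat{\vec f}_I(\vec x_i)\|_{p^*}$. *)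

theory Defs
  imports "Jordan_Normal_Form.Matrix" "HOL-Library.Extended_Real"
begin

definition mtrace :: "complex mat \<Rightarrow> complex" where
  "mtrace A = (\<Sum>i<dim_row A. A $$ (i, i))"

definition hermitian :: "nat \<Rightarrow> complex mat \<Rightarrow> bool" where
  "hermitian d A \<longleftrightarrow> A \<in> carrier_mat d d \<and>
     (\<forall>i<d. \<forall>j<d. A $$ (i, j) = cnj (A $$ (j, i)))"

definition psd :: "nat \<Rightarrow> complex mat \<Rightarrow> bool" where
  "psd d A \<longleftrightarrow> hermitian d A \<and>
     (\<forall>v :: nat \<Rightarrow> complex. 0 \<le> Re (\<Sum>i<d. \<Sum>j<d. cnj (v i) * A $$ (i, j) * v j))"

text \<open>Block (a,b) of size d x d of a (k d) x (k d) matrix, and the action of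
  Phi tensor id_k on such a block matrix.\<close>
definition block :: "nat \<Rightarrow> complex mat \<Rightarrow> nat \<Rightarrow> nat \<Rightarrow> complex mat" where
  "block d X a b = mat d d (\<lambda>(r, s). X $$ (a * d + r, b * d + s))"

definition ampl :: "nat \<Rightarrow> nat \<Rightarrow> (complex mat \<Rightarrow> complex mat) \<Rightarrow> complex mat \<Rightarrow> complex mat" where
  "ampl d k \<Phi> X = mat (k * d) (k * d)
      (\<lambda>(i, j). \<Phi> (block d X (i div d) (j div d)) $$ (i mod d, j mod d))"

definition quantum_channel :: "nat \<Rightarrow> (complex mat \<Rightarrow> complex mat) \<Rightarrow> bool" where
  "quantum_channel n \<Phi> \<longleftrightarrow>
     (let d = 2 ^ n in
      (\<forall>A \<in> carrier_mat d d. \<Phi> A \<in> carrier_mat d d) \<and>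
      (\<forall>A \<in> carrier_mat d d. \<forall>B \<in> carrier_mat d d. \<Phi> (A + B) = \<Phi> A + \<Phi> B) \<and>
      (\<forall>A \<in> carrier_mat d d. \<forall>c. \<Phi> (c \<cdot>\<^sub>m A) = c \<cdot>\<^sub>m \<Phi> A) \<and>
      (\<forall>A \<in> carrier_mat d d. mtrace (\<Phi> A) = mtrace A) \<and>
      (\<forall>k>0. \<forall>X. psd (k * d) X \<longrightarrow> psd (k * d) (ampl d k \<Phi> X)))"

definition unital_channel :: "nat \<Rightarrow> (complex mat \<Rightarrow> complex mat) \<Rightarrow> bool" where
  "unital_channel n \<Phi> \<longleftrightarrow> quantum_channel n \<Phi> \<and> \<Phi> (1\<^sub>m (2 ^ n)) = 1\<^sub>m (2 ^ n)"

text \<open>Single-qubit Paulis P0 = I, P1 = X, P2 = Y, P3 = Z as entry functions.\<close>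
definition sigma :: "nat \<Rightarrow> nat \<Rightarrow> nat \<Rightarrow> complex" where
  "sigma a r s =
     (if a = 0 then (if r = s then 1 else 0)
      else if a = 1 then (if r \<noteq> s then 1 else 0)
      else if a = 2 then (if r = 0 \<and> s = 1 then - \<i> else if r = 1 \<and> s = 0 then \<i> else 0)
      else (if r = s then (if r = 0 then 1 else -1) else 0))"

text \<open>Pauli string z (list of length n, entries in 0..3): tensor product of the
  sigma (z!k), qubit k corresponding to bit k of the basis index.\<close>
definition pauli :: "nat \<Rightarrow> nat list \<Rightarrow> complex mat" where
  "pauli n z = mat (2 ^ n) (2 ^ n)
     (\<lambda>(i, j). \<Prod>k<n. sigma (z ! k) (i div 2 ^ k mod 2) (j div 2 ^ k mod 2))"

definition pstrings :: "nat \<Rightarrow> nat list set" where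
  "pstrings n = {z. length z = n \<and> set z \<subseteq> {0..<4}}"

text \<open>Non-zero Pauli strings (index set of hat M, of size N = 4^n - 1).\<close>
definition nzstrings :: "nat \<Rightarrow> nat list set" where
  "nzstrings n = pstrings n - {replicate n 0}"

definition repM :: "nat \<Rightarrow> (complex mat \<Rightarrow> complex mat) \<Rightarrow> nat list \<Rightarrow> nat list \<Rightarrow> complex" where
  "repM n \<Phi> z x = mtrace (pauli n z * \<Phi> (pauli n x)) / 2 ^ n"

definition lpnorm :: "real \<Rightarrow> 'i set \<Rightarrow> ('i \<Rightarrow> complex) \<Rightarrow> real" where
  "lpnorm p I v = (\<Sum>i\<in>I. cmod (v i) powr p) powr (1 / p)"

definition lpnorm_e :: "ereal \<Rightarrow> 'i set \<Rightarrow> ('i \<Rightarrow> complex) \<Rightarrow> real" where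
  "lpnorm_e p I v = (if p = \<infinity> then Max ((\<lambda>i. cmod (v i)) ` I) else lpnorm (real_of_ereal p) I v)"

definition pstar :: "real \<Rightarrow> ereal" where
  "pstar p = (if p = 1 then \<infinity> else ereal (p / (p - 1)))"

definition recip_e :: "ereal \<Rightarrow> real" where
  "recip_e q = (if q = \<infinity> then 0 else 1 / real_of_ereal q)"

definition group_norm :: "nat \<Rightarrow> real \<Rightarrow> ereal \<Rightarrow> (nat list \<Rightarrow> nat list \<Rightarrow> complex) \<Rightarrow> real" where
  "group_norm n p q M =
     (let rows = nzstrings n; rn = (\<lambda>z. lpnorm p (nzstrings n) (M z)) in
      if q = \<infinity> then Max (rn ` rows)
      else ((\<Sum>z\<in>rows. rn z powr real_of_ereal q) / real (card rows)) powr (1 / real_of_ereal q))"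

definition mu_hat :: "nat \<Rightarrow> real \<Rightarrow> ereal \<Rightarrow> (complex mat \<Rightarrow> complex mat) list \<Rightarrow> real" where
  "mu_hat n p q cs = prod_list (map (\<lambda>\<Phi>. group_norm n p q (repM n \<Phi>)) cs)"

text \<open>C_l = Phi_l o ... o Phi_1 for cs = [Phi_1, ..., Phi_l] (Phi_1 applied first).\<close>
definition apply_circuit :: "(complex mat \<Rightarrow> complex mat) list \<Rightarrow> complex mat \<Rightarrow> complex mat" where
  "apply_circuit cs X = fold (\<lambda>\<Phi> Y. \<Phi> Y) cs X"

definition circuits :: "nat \<Rightarrow> nat \<Rightarrow> real \<Rightarrow> ereal \<Rightarrow> real \<Rightarrow> (complex mat \<Rightarrow> complex mat) list set" where
  "circuits n l p q \<mu> = {cs. length cs = l \<and> (\<forall>\<Phi>\<in>set cs. unital_channel n \<Phi>) \<and> mu_hat n p q cs \<le> \<mu>}"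

text \<open>f_{C}(x) = Tr(C_l(rho(x)) H) (a real number; we take the real part).\<close>
definition f_circ :: "('x \<Rightarrow> complex mat) \<Rightarrow> complex mat \<Rightarrow> (complex mat \<Rightarrow> complex mat) list \<Rightarrow> 'x \<Rightarrow> real" where
  "f_circ \<rho> H cs x = Re (mtrace (apply_circuit cs (\<rho> x) * H))"

definition fclass :: "nat \<Rightarrow> nat \<Rightarrow> real \<Rightarrow> ereal \<Rightarrow> real \<Rightarrow> ('x \<Rightarrow> complex mat) \<Rightarrow> complex mat \<Rightarrow> ('x \<Rightarrow> real) set" where
  "fclass n l p q \<mu> \<rho> H = f_circ \<rho> H ` circuits n l p q \<mu>"

definition signs :: "nat \<Rightarrow> real list set" where
  "signs m = {e. length e = m \<and> set e \<subseteq> {-1, 1}}"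

definition rademacher :: "'x list \<Rightarrow> ('x \<Rightarrow> real) set \<Rightarrow> real" where
  "rademacher xs G =
     (let m = length xs in
      (\<Sum>e\<in>signs m. (1 / real m) *
          Sup {\<bar>\<Sum>i<m. e ! i * g (xs ! i)\<bar> | g. g \<in> G}) / 2 ^ m)"

definition pure_state :: "nat \<Rightarrow> complex mat \<Rightarrow> bool" where
  "pure_state n R \<longleftrightarrow> (\<exists>v :: nat \<Rightarrow> complex. (\<Sum>i<2 ^ n. (cmod (v i))\<^sup>2) = 1 \<and>
       R = mat (2 ^ n) (2 ^ n) (\<lambda>(i, j). v i * cnj (v j)))"

definition fI_hat :: "nat \<Rightarrow> complex mat \<Rightarrow> nat list \<Rightarrow> complex" where
  "fI_hat n R z = mtrace (pauli n z * R) / 2 ^ n"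

definition K_hat :: "nat \<Rightarrow> real \<Rightarrow> ('x \<Rightarrow> complex mat) \<Rightarrow> 'x list \<Rightarrow> complex mat \<Rightarrow> real" where
  "K_hat n p \<rho> xs H =
     lpnorm p (nzstrings n) (\<lambda>z. mtrace (pauli n z * H)) *
     Max {lpnorm_e (pstar p) (nzstrings n) (fI_hat n (\<rho> (xs ! i))) | i. i < length xs}"

end

theory Submission
  imports Defs "HOL-Analysis.Convex" "HOL-Probability.Hoeffding"
begin


definition nrm :: "real \<Rightarrow> 'i set \<Rightarrow> ('i \<Rightarrow> real) \<Rightarrow> real" where
  "nrm r S a = (\<Sum>i\<in>S. a i powr r) powr (1/r)"

lemma nrm_nonneg: "nrm r S a \<ge> 0" by (simp add: nrm_def)

lemma nrm_pow: assumes "r > 0" "\<forall>i\<in>S. a i \<ge> 0"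
  shows "nrm r S a powr r = (\<Sum>i\<in>S. a i powr r)"
  unfolding nrm_def using assms by (simp add: powr_powr sum_nonneg)

lemma nrm_zero_imp: assumes "finite S" "r > 0" "\<forall>i\<in>S. a i \<ge> 0" "nrm r S a = 0" "i \<in> S"
  shows "a i = 0"
proof -
  have "(\<Sum>i\<in>S. a i powr r) = 0" using assms(4) unfolding nrm_def by simp
  hence "\<forall>i\<in>S. a i powr r = 0" using assms(1) by (subst (asm) sum_nonneg_eq_0_iff) auto
  thus ?thesis using assms(5) by simp
qed

lemma holder:
  assumes "finite S" "\<forall>i\<in>S. a i \<ge> 0" "\<forall>i\<in>S. b i \<ge> 0" "p > 1" "q > 1" "1/p + 1/q = 1"
  shows "(\<Sum>i\<in>S. a i * b i) \<le> nrm p S a * nrm q S b"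
proof (cases "nrm p S a = 0 \<or> nrm q S b = 0")
  case True
  then have "\<forall>i\<in>S. a i * b i = 0"
    using nrm_zero_imp[of S p a] nrm_zero_imp[of S q b] assms by auto
  then have "(\<Sum>i\<in>S. a i * b i) = 0" by (intro sum.neutral) auto
  then show ?thesis by (simp add: nrm_nonneg)
next
  case False
  define A where "A = nrm p S a"
  define B where "B = nrm q S b"
  have A: "A > 0" using False nrm_nonneg A_def by (metis less_eq_real_def)
  have B: "B > 0" using False nrm_nonneg B_def by (metis less_eq_real_def)
  have "(\<Sum>i\<in>S. (a i / A) * (b i / B)) \<le> (\<Sum>i\<in>S. (a i / A) powr p / p + (b i / B) powr q / q)"
    by (rule sum_mono, rule Youngs_inequality) (use assms A B in auto)
  also have "\<dots> = (\<Sum>i\<in>S. a i powr p) / A powr p / p + (\<Sum>i\<in>S. b i powr q) / B powr q / q"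
    using assms A B by (simp add: powr_divide sum.distrib sum_divide_distrib)
  also have "\<dots> = 1/p + 1/q"
    using A B assms powr_gt_zero[of A p] powr_gt_zero[of B q] nrm_pow[of p S a] nrm_pow[of q S b] unfolding A_def B_def by simp
  finally have "(\<Sum>i\<in>S. a i * b i) / (A * B) \<le> 1"
    using assms(6) by (simp add: sum_divide_distrib)
  then show ?thesis using A B unfolding A_def B_def by (simp add: divide_le_eq)
qed

lemma nrm_const: assumes "finite S" "q > 0" shows "nrm q S (\<lambda>_. 1) = real (card S) powr (1/q)"
  using assms by (simp add: nrm_def)

lemma sum_le_card_nrm:
  assumes "finite S" "\<forall>i\<in>S. a i \<ge> 0" "s \<ge> 1"
  shows "(\<Sum>i\<in>S. a i) \<le> real (card S) powr (1 - 1/s) * nrm s S a"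
proof (cases "s = 1")
  case True
  then show ?thesis using assms by (cases "card S = 0") (auto simp: nrm_def sum_nonneg)
next
  case False
  define q where "q = s / (s - 1)"
  have s: "s > 1" using False assms by simp
  have q: "q > 1" using s unfolding q_def by (simp add: field_simps)
  have pq: "1/s + 1/q = 1" using s unfolding q_def by (simp add: field_simps)
  have "(\<Sum>i\<in>S. a i) = (\<Sum>i\<in>S. a i * 1)" by simp
  also have "\<dots> \<le> nrm s S a * nrm q S (\<lambda>_. 1)"
    by (rule holder) (use assms s q pq in auto)
  also have "nrm q S (\<lambda>_. 1) = real (card S) powr (1 - 1/s)"
    using nrm_const[OF assms(1), of q] q s unfolding q_def by (simp add: field_simps)
  finally show ?thesis by (simp add: mult.commute)
qed

lemma comp_le_nrm: assumes "finite S" "i \<in> S" "\<forall>i\<in>S. a i \<ge> 0" "r > 0"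
  shows "a i \<le> nrm r S a"
proof -
  have "a i powr r \<le> (\<Sum>i\<in>S. a i powr r)"
    using assms by (intro member_le_sum) auto
  hence "(a i powr r) powr (1/r) \<le> (\<Sum>i\<in>S. a i powr r) powr (1/r)"
    using assms by (intro powr_mono2) auto
  thus ?thesis using assms by (simp add: powr_powr nrm_def)
qed

lemma subadd_powr:
  fixes b :: "'i \<Rightarrow> real"
  assumes "finite S" "\<forall>i\<in>S. b i \<ge> 0" "0 < s" "s \<le> 1"
  shows "(\<Sum>i\<in>S. b i) powr s \<le> (\<Sum>i\<in>S. b i powr s)"
proof (cases "(\<Sum>i\<in>S. b i) = 0")
  case True
  have "0 \<le> (\<Sum>i\<in>S. b i powr s)" by (rule sum_nonneg) simp
  then show ?thesis using True by simp
next
  case False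
  define T where "T = (\<Sum>i\<in>S. b i)"
  have T: "T > 0" using False sum_nonneg assms unfolding T_def by (metis less_eq_real_def)
  have "\<forall>i\<in>S. b i * T powr (s - 1) \<le> b i powr s"
  proof
    fix i assume i: "i \<in> S"
    show "b i * T powr (s - 1) \<le> b i powr s"
    proof (cases "b i = 0")
      case True then show ?thesis by simp
    next
      case False
      hence bi: "b i > 0" using assms(2) i by force
      have "b i \<le> T" unfolding T_def using assms i by (intro member_le_sum) auto
      hence "T powr (s - 1) \<le> b i powr (s - 1)"
        using bi assms by (intro powr_mono2') auto
      hence "b i * T powr (s - 1) \<le> b i * b i powr (s - 1)"
        using bi by (simp add: mult_left_mono)
      also have "\<dots> = b i powr s" using bi by (simp add: powr_mult_base)
      finally show ?thesis .
    qed
  qed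
  hence "(\<Sum>i\<in>S. b i * T powr (s - 1)) \<le> (\<Sum>i\<in>S. b i powr s)" by (intro sum_mono) auto
  moreover have "(\<Sum>i\<in>S. b i * T powr (s - 1)) = T powr s"
  proof -
    have "(\<Sum>i\<in>S. b i * T powr (s - 1)) = T * T powr (s - 1)"
      by (simp add: sum_distrib_right T_def)
    also have "\<dots> = T powr s" using T by (simp add: powr_mult_base)
    finally show ?thesis .
  qed
  ultimately show ?thesis unfolding T_def by simp
qed

lemma nrm_mono_exp:
  assumes "finite S" "\<forall>i\<in>S. a i \<ge> 0" "0 < q" "q \<le> r"
  shows "nrm r S a \<le> nrm q S a"
proof -
  define Q where "Q = nrm q S a"
  have Q: "Q \<ge> 0" using nrm_nonneg Q_def by simp
  have "\<forall>i\<in>S. a i powr r \<le> a i powr q * Q powr (r - q)"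
  proof
    fix i assume i: "i \<in> S"
    have ai: "a i \<le> Q" unfolding Q_def using comp_le_nrm[OF assms(1) i assms(2) assms(3)] .
    show "a i powr r \<le> a i powr q * Q powr (r - q)"
    proof (cases "a i = 0")
      case True then show ?thesis using assms by simp
    next
      case False
      hence "a i > 0" using assms(2) i by force
      hence "a i powr r = a i powr q * a i powr (r - q)" by (simp flip: powr_add)
      also have "\<dots> \<le> a i powr q * Q powr (r - q)"
        using ai \<open>a i > 0\<close> assms by (intro mult_left_mono powr_mono2) auto
      finally show ?thesis .
    qed
  qed
  hence "(\<Sum>i\<in>S. a i powr r) \<le> (\<Sum>i\<in>S. a i powr q) * Q powr (r - q)"
    by (simp add: sum_distrib_right sum_mono)
  also have "(\<Sum>i\<in>S. a i powr q) = Q powr q" unfolding Q_def using nrm_pow[OF assms(3) assms(2)] by simp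
  also have "Q powr q * Q powr (r - q) = Q powr r"
    using Q assms by (cases "Q = 0") (simp_all flip: powr_add)
  finally have "(\<Sum>i\<in>S. a i powr r) \<le> Q powr r" .
  hence "(\<Sum>i\<in>S. a i powr r) powr (1/r) \<le> (Q powr r) powr (1/r)"
    using assms by (intro powr_mono2) (auto intro: sum_nonneg)
  thus ?thesis using Q assms unfolding nrm_def[of r] Q_def by (simp add: powr_powr)
qed


lemma signs_0: "signs 0 = {[]}" by (auto simp: signs_def)

lemma signs_Suc: "signs (Suc m) = (\<lambda>(x, e). x # e) ` ({-1, 1} \<times> signs m)"
  by (auto simp: signs_def length_Suc_conv image_iff)

lemma finite_signs: "finite (signs m)"
  by (induction m) (auto simp: signs_0 signs_Suc)

lemma sum_signs_Suc:
  "(\<Sum>e\<in>signs (Suc m). F e) = (\<Sum>e\<in>signs m. F (1 # e) + F ((-1) # e))"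
proof -
  have inj: "inj_on (\<lambda>(x, e). x # e) ({-1::real, 1} \<times> signs m)" by (auto simp: inj_on_def)
  have "(\<Sum>e\<in>signs (Suc m). F e) = (\<Sum>p\<in>{-1::real, 1} \<times> signs m. F (fst p # snd p))"
    unfolding signs_Suc by (subst sum.reindex[OF inj]) (auto intro!: sum.cong)
  also have "\<dots> = (\<Sum>x\<in>{-1::real, 1}. \<Sum>e\<in>signs m. F (x # e))"
    by (simp add: sum.cartesian_product case_prod_beta)
  also have "\<dots> = (\<Sum>e\<in>signs m. F (1 # e) + F ((-1) # e))"
    by (simp add: sum.distrib add.commute)
  finally show ?thesis .
qed

lemma card_signs: "card (signs m) = 2 ^ m"
proof (induction m)
  case 0 then show ?case by (simp add: signs_0)
next
  case (Suc m)
  have "real (card (signs (Suc m))) = (\<Sum>e\<in>signs (Suc m). 1)" by simp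
  also have "\<dots> = (\<Sum>e\<in>signs m. 2)" by (subst sum_signs_Suc) simp
  also have "\<dots> = 2 * 2 ^ m" using Suc by simp
  finally show ?case by (metis of_nat_eq_iff of_nat_numeral of_nat_mult of_nat_power power_Suc)
qed

lemma sum_shift_signs:
  "(\<Sum>i<Suc m. (x # e) ! i * a i) = x * a 0 + (\<Sum>i<m. e ! i * a (Suc i))"
  unfolding sum.lessThan_Suc_shift by simp

lemma cosh_bound: "exp y + exp (- y) \<le> 2 * exp ((y::real)\<^sup>2 / 2)"
proof -
  have key: "exp y + exp (- y) \<le> 2 * exp (y\<^sup>2 / 2)" if y: "y \<ge> 0" for y :: real
  proof -
    have "- (2*y) * (1/2) + ln (1 + (1/2) * (exp (2*y) - 1)) \<le> (2*y)\<^sup>2 / 8"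
      using Hoeffdings_lemma_aux[of "2*y" "1/2"] y by simp
    hence "ln ((1 + exp (2*y)) / 2) \<le> y + y\<^sup>2 / 2"
      by (simp add: field_simps power2_eq_square)
    hence "exp (ln ((1 + exp (2*y)) / 2)) \<le> exp (y + y\<^sup>2 / 2)" by simp
    hence "(1 + exp (2*y)) / 2 \<le> exp (y + y\<^sup>2 / 2)"
      by (simp add: add_pos_pos)
    hence "exp (-y) * ((1 + exp (2*y)) / 2) \<le> exp (-y) * exp (y + y\<^sup>2 / 2)"
      by (intro mult_left_mono) auto
    thus ?thesis by (simp add: field_simps flip: exp_add)
  qed
  show ?thesis
  proof (cases "y \<ge> 0")
    case True then show ?thesis using key by simp
  next
    case False then show ?thesis using key[of "-y"] by (simp add: add.commute)
  qed
qed

lemma mgf_bound: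
  fixes a :: "nat \<Rightarrow> real"
  shows "(\<Sum>e\<in>signs m. exp (l * (\<Sum>i<m. e ! i * a i)))
           \<le> 2 ^ m * exp (l\<^sup>2 * (\<Sum>i<m. (a i)\<^sup>2) / 2)"
proof (induction m arbitrary: a)
  case 0 then show ?case by (simp add: signs_0)
next
  case (Suc m)
  define X where "X e = (\<Sum>i<m. e ! i * a (Suc i))" for e
  have "(\<Sum>e\<in>signs (Suc m). exp (l * (\<Sum>i<Suc m. e ! i * a i)))
      = (\<Sum>e\<in>signs m. (exp (l * a 0) + exp (- (l * a 0))) * exp (l * X e))"
    unfolding sum_signs_Suc sum_shift_signs X_def
    by (intro sum.cong) (auto simp: distrib_left exp_add[symmetric] algebra_simps)
  also have "\<dots> = (exp (l * a 0) + exp (- (l * a 0))) * (\<Sum>e\<in>signs m. exp (l * X e))"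
    by (simp add: sum_distrib_left)
  also have "\<dots> \<le> (2 * exp ((l * a 0)\<^sup>2 / 2)) * (2 ^ m * exp (l\<^sup>2 * (\<Sum>i<m. (a (Suc i))\<^sup>2) / 2))"
    using Suc[of "\<lambda>i. a (Suc i)"] unfolding X_def
    by (intro mult_mono cosh_bound) (auto intro: sum_nonneg add_nonneg_nonneg)
  also have "\<dots> = 2 ^ Suc m * exp (l\<^sup>2 * (\<Sum>i<Suc m. (a i)\<^sup>2) / 2)"
    unfolding sum.lessThan_Suc_shift by (simp add: power_mult_distrib distrib_left add_divide_distrib exp_add)
  finally show ?case .
qed

lemma second_moment:
  fixes a :: "nat \<Rightarrow> real"
  shows "(\<Sum>e\<in>signs m. (\<Sum>i<m. e ! i * a i)\<^sup>2) = 2 ^ m * (\<Sum>i<m. (a i)\<^sup>2)"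
proof (induction m arbitrary: a)
  case 0 then show ?case by (simp add: signs_0)
next
  case (Suc m)
  define X where "X e = (\<Sum>i<m. e ! i * a (Suc i))" for e
  have "(\<Sum>e\<in>signs (Suc m). (\<Sum>i<Suc m. e ! i * a i)\<^sup>2)
      = (\<Sum>e\<in>signs m. 2 * (a 0)\<^sup>2 + 2 * (X e)\<^sup>2)"
    unfolding sum_signs_Suc sum_shift_signs X_def
    by (intro sum.cong) (auto simp: power2_eq_square algebra_simps)
  also have "\<dots> = 2 * (a 0)\<^sup>2 * 2 ^ m + 2 * (\<Sum>e\<in>signs m. (X e)\<^sup>2)"
    by (simp add: sum.distrib sum_distrib_left card_signs)
  also have "\<dots> = 2 ^ Suc m * (\<Sum>i<Suc m. (a i)\<^sup>2)"
    using Suc[of "\<lambda>i. a (Suc i)"] unfolding X_def sum.lessThan_Suc_shift by (simp add: algebra_simps)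
  finally show ?case .
qed

lemma powr_exp_bound:
  fixes t r l :: real
  assumes "t \<ge> 0" "r > 0" "l > 0"
  shows "t powr r \<le> (r / (exp 1 * l)) powr r * exp (l * t)"
proof (cases "t = 0")
  case True then show ?thesis by simp
next
  case False
  hence t: "t > 0" using assms by simp
  define u where "u = l * t / r"
  have u: "u > 0" using t assms unfolding u_def by simp
  have "ln u \<le> u - 1" using ln_le_minus_one[OF u] .
  hence "r * ln u \<le> r * (u - 1)" using assms by (intro mult_left_mono) auto
  hence "r * ln t \<le> r * ln (r / (exp 1 * l)) + l * t"
    using t assms unfolding u_def by (simp add: ln_div ln_mult algebra_simps)
  hence "exp (r * ln t) \<le> exp (r * ln (r / (exp 1 * l)) + l * t)" by simp
  thus ?thesis using t assms by (simp add: powr_def exp_add)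
qed

lemma moment_bound:
  fixes a :: "nat \<Rightarrow> real" and r :: real
  assumes r: "r \<ge> 2"
  shows "(\<Sum>e\<in>signs m. \<bar>\<Sum>i<m. e ! i * a i\<bar> powr r)
           \<le> 2 ^ m * r powr (r/2) * (\<Sum>i<m. (a i)\<^sup>2) powr (r/2)"
proof (cases "(\<Sum>i<m. (a i)\<^sup>2) = 0")
  case True
  hence "\<forall>i<m. a i = 0" by (subst (asm) sum_nonneg_eq_0_iff) auto
  hence "\<forall>e. (\<Sum>i<m. e ! i * a i) = 0" by simp
  thus ?thesis using True by simp
next
  case False
  define s2 where "s2 = (\<Sum>i<m. (a i)\<^sup>2)"
  have s2: "s2 > 0" using False sum_nonneg[of "{..<m}" "\<lambda>i. (a i)\<^sup>2"] unfolding s2_def by force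
  define \<sigma> where "\<sigma> = sqrt s2"
  have \<sigma>: "\<sigma> > 0" using s2 unfolding \<sigma>_def by simp
  define l where "l = sqrt r / \<sigma>"
  have l: "l > 0" using \<sigma> r unfolding l_def by simp
  define C where "C = (r / (exp 1 * l)) powr r"
  define X where "X e = (\<Sum>i<m. e ! i * a i)" for e
  have pt: "\<bar>X e\<bar> powr r \<le> C * (exp (l * X e) + exp ((- l) * X e))" for e
  proof -
    have "\<bar>X e\<bar> powr r \<le> C * exp (l * \<bar>X e\<bar>)"
      unfolding C_def by (rule powr_exp_bound) (use r l in auto)
    also have "\<dots> \<le> C * (exp (l * X e) + exp ((- l) * X e))"
      unfolding C_def by (intro mult_left_mono) (auto simp: abs_if)
    finally show ?thesis .
  qed
  have "(\<Sum>e\<in>signs m. \<bar>X e\<bar> powr r)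
       \<le> (\<Sum>e\<in>signs m. C * (exp (l * X e) + exp ((- l) * X e)))"
    by (intro sum_mono pt)
  also have "\<dots> = C * ((\<Sum>e\<in>signs m. exp (l * X e)) + (\<Sum>e\<in>signs m. exp ((- l) * X e)))"
    by (simp add: sum_distrib_left sum.distrib distrib_left)
  also have "\<dots> \<le> C * (2 ^ m * exp (l\<^sup>2 * s2 / 2) + 2 ^ m * exp ((- l)\<^sup>2 * s2 / 2))"
    unfolding X_def s2_def C_def by (intro mult_left_mono add_mono mgf_bound) auto
  also have "l\<^sup>2 * s2 = r" using \<sigma> r s2 unfolding l_def \<sigma>_def by (simp add: power_divide)
  also have "(- l)\<^sup>2 * s2 = r" using \<sigma> r s2 unfolding l_def \<sigma>_def by (simp add: power_divide)
  also have "C = r powr (r/2) * s2 powr (r/2) * exp (- r)"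
  proof -
    have "r / (exp 1 * l) = sqrt r * \<sigma> * exp (- 1)"
      using r \<sigma> unfolding l_def by (simp add: field_simps exp_minus real_sqrt_mult_self
          flip: real_sqrt_mult)
    hence "C = (sqrt r) powr r * \<sigma> powr r * (exp (- 1)) powr r"
      unfolding C_def using r \<sigma> by (simp add: powr_mult)
    also have "(sqrt r) powr r = r powr (r/2)" using r by (simp add: powr_half_sqrt[symmetric] powr_powr)
    also have "\<sigma> powr r = s2 powr (r/2)" using s2 unfolding \<sigma>_def by (simp add: powr_half_sqrt[symmetric] powr_powr)
    also have "(exp (- 1)) powr r = exp (- r)" by (simp add: powr_def)
    finally show ?thesis .
  qed
  finally have A0: "(\<Sum>e\<in>signs m. \<bar>X e\<bar> powr r) \<le> r powr (r/2) * s2 powr (r/2) * exp (- r) * (2 ^ m * exp (r / 2) + 2 ^ m * exp (r / 2))" .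
  have ee: "exp (- r) * exp (r / 2) = exp (- r / 2)" by (simp flip: exp_add)
  have A: "(\<Sum>e\<in>signs m. \<bar>X e\<bar> powr r) \<le> 2 ^ m * r powr (r/2) * s2 powr (r/2) * (2 * exp (- r / 2))"
  proof -
    have eq: "r powr (r/2) * s2 powr (r/2) * exp (- r) * (2 ^ m * exp (r / 2) + 2 ^ m * exp (r / 2))
      = 2 ^ m * r powr (r/2) * s2 powr (r/2) * (2 * (exp (- r) * exp (r / 2)))" by (simp add: field_simps)
    show ?thesis using A0 unfolding eq ee .
  qed
  have "exp (1::real) \<ge> 2" using exp_ge_add_one_self[of 1] by simp
  moreover have "exp 1 \<le> exp (r / 2)" using r by simp
  ultimately have "exp (r / 2) \<ge> 2" by linarith
  hence "2 * exp (- r / 2) \<le> 1" by (simp add: exp_minus field_simps)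
  hence "2 ^ m * r powr (r/2) * s2 powr (r/2) * (2 * exp (- r / 2)) \<le> 2 ^ m * r powr (r/2) * s2 powr (r/2) * 1"
    by (intro mult_left_mono) auto
  with A have "(\<Sum>e\<in>signs m. \<bar>X e\<bar> powr r) \<le> 2 ^ m * r powr (r/2) * s2 powr (r/2) * 1"
    by (rule order_trans)
  thus ?thesis unfolding X_def s2_def by simp
qed


lemma jensen_sum:
  assumes "finite A" "r \<ge> 1" "\<forall>e\<in>A. Y e \<ge> 0" "(\<Sum>e\<in>A. Y e powr r) \<le> T"
  shows "(\<Sum>e\<in>A. Y e) \<le> real (card A) powr (1 - 1/r) * T powr (1/r)"
proof -
  have "(\<Sum>e\<in>A. Y e) \<le> real (card A) powr (1 - 1/r) * nrm r A Y"
    by (rule sum_le_card_nrm) (use assms in auto)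
  also have "nrm r A Y \<le> T powr (1/r)"
    unfolding nrm_def using assms by (intro powr_mono2) (auto intro: sum_nonneg)
  finally show ?thesis by (simp add: mult_left_mono)
qed

lemma sq_powr: "((x::real)\<^sup>2) powr (r/2) = \<bar>x\<bar> powr r"
proof (cases "x = 0")
  case True then show ?thesis by simp
next
  case False
  have "x\<^sup>2 = \<bar>x\<bar> powr 2" using False by (simp add: powr_realpow[of "\<bar>x\<bar>" 2, simplified])
  moreover have "(\<bar>x\<bar> powr 2) powr (r/2) = \<bar>x\<bar> powr r" by (simp only: powr_powr) simp
  ultimately show ?thesis by metis
qed

lemma pow_sq_le:
  fixes w :: "nat \<Rightarrow> real"
  assumes "r \<ge> 2" "m \<ge> 1"
  shows "(\<Sum>i<m. (w i)\<^sup>2) powr (r/2) \<le> real m powr (r/2 - 1) * (\<Sum>i<m. \<bar>w i\<bar> powr r)"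
proof -
  have "(\<Sum>i<m. (w i)\<^sup>2) \<le> real (card {..<m}) powr (1 - 1/(r/2)) * nrm (r/2) {..<m} (\<lambda>i. (w i)\<^sup>2)"
    by (rule sum_le_card_nrm) (use assms in auto)
  hence "(\<Sum>i<m. (w i)\<^sup>2) powr (r/2) \<le> (real m powr (1 - 1/(r/2)) * nrm (r/2) {..<m} (\<lambda>i. (w i)\<^sup>2)) powr (r/2)"
    using assms by (intro powr_mono2) (auto intro: sum_nonneg)
  also have "\<dots> = real m powr (r/2 - 1) * (\<Sum>i<m. ((w i)\<^sup>2) powr (r/2))"
  proof -
    have e: "(1 - 2/r) * r / 2 = r/2 - 1" using assms by (simp add: field_simps)
    have "(real m powr (1 - 1/(r/2)) * nrm (r/2) {..<m} (\<lambda>i. (w i)\<^sup>2)) powr (r/2)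
       = (real m powr (1 - 1/(r/2))) powr (r/2) * nrm (r/2) {..<m} (\<lambda>i. (w i)\<^sup>2) powr (r/2)"
      by (simp add: powr_mult nrm_nonneg)
    also have "(real m powr (1 - 1/(r/2))) powr (r/2) = real m powr (r/2 - 1)"
      by (simp add: powr_powr e)
    also have "nrm (r/2) {..<m} (\<lambda>i. (w i)\<^sup>2) powr (r/2) = (\<Sum>i<m. ((w i)\<^sup>2) powr (r/2))"
      using assms by (intro nrm_pow) auto
    finally show ?thesis .
  qed
  also have "(\<Sum>i<m. ((w i)\<^sup>2) powr (r/2)) = (\<Sum>i<m. \<bar>w i\<bar> powr r)"
    by (intro sum.cong refl sq_powr)
  finally show ?thesis .
qed

lemma vec_khintchine:
  fixes w :: "nat \<Rightarrow> 'i \<Rightarrow> real"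
  assumes S: "finite S" and r: "r \<ge> 2" and m: "m \<ge> 1"
    and wB: "\<forall>i<m. nrm r S (\<lambda>z. \<bar>w i z\<bar>) \<le> B"
  shows "(\<Sum>e\<in>signs m. nrm r S (\<lambda>z. \<bar>\<Sum>i<m. e ! i * w i z\<bar>)) \<le> 2 ^ m * sqrt r * sqrt m * B"
proof -
  have B: "B \<ge> 0" using wB m nrm_nonneg[of r S "\<lambda>z. \<bar>w 0 z\<bar>"] by force
  define U where "U e z = (\<Sum>i<m. e ! i * w i z)" for e z
  define c where "c = 2 ^ m * r powr (r/2) * real m powr (r/2 - 1)"
  have c: "c \<ge> 0" unfolding c_def by simp
  have "(\<Sum>e\<in>signs m. nrm r S (\<lambda>z. \<bar>U e z\<bar>) powr r) = (\<Sum>e\<in>signs m. \<Sum>z\<in>S. \<bar>U e z\<bar> powr r)"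
    using r by (intro sum.cong refl nrm_pow) auto
  also have "\<dots> = (\<Sum>z\<in>S. \<Sum>e\<in>signs m. \<bar>U e z\<bar> powr r)" by (rule sum.swap)
  also have "\<dots> \<le> (\<Sum>z\<in>S. 2 ^ m * r powr (r/2) * (\<Sum>i<m. (w i z)\<^sup>2) powr (r/2))"
    unfolding U_def by (intro sum_mono moment_bound r)
  also have "\<dots> \<le> (\<Sum>z\<in>S. c * (\<Sum>i<m. \<bar>w i z\<bar> powr r))"
    unfolding c_def using pow_sq_le[OF r m] by (intro sum_mono) (simp add: mult.assoc mult_left_mono)
  also have "\<dots> = c * (\<Sum>i<m. \<Sum>z\<in>S. \<bar>w i z\<bar> powr r)"
    by (simp add: sum_distrib_left sum.swap[of _ S])
  also have "\<dots> \<le> c * (\<Sum>i<m. B powr r)"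
  proof (intro mult_left_mono c sum_mono)
    fix i assume "i \<in> {..<m}"
    hence "nrm r S (\<lambda>z. \<bar>w i z\<bar>) powr r \<le> B powr r" using wB r by (intro powr_mono2) (auto simp: nrm_nonneg)
    thus "(\<Sum>z\<in>S. \<bar>w i z\<bar> powr r) \<le> B powr r" using nrm_pow[of r S "\<lambda>z. \<bar>w i z\<bar>"] r by simp
  qed
  also have "\<dots> = 2 ^ m * (r powr (r/2) * real m powr (r/2) * B powr r)"
  proof -
    have "real m powr (r/2 - 1) * real m = real m powr (r/2)"
      using m powr_mult_base[of "real m" "r/2 - 1"] by (simp add: mult.commute)
    thus ?thesis unfolding c_def by (simp add: algebra_simps)
  qed
  finally have T: "(\<Sum>e\<in>signs m. nrm r S (\<lambda>z. \<bar>U e z\<bar>) powr r) \<le> 2 ^ m * (r powr (r/2) * real m powr (r/2) * B powr r)" .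
  have "(\<Sum>e\<in>signs m. nrm r S (\<lambda>z. \<bar>U e z\<bar>))
     \<le> real (card (signs m)) powr (1 - 1/r) * (2 ^ m * (r powr (r/2) * real m powr (r/2) * B powr r)) powr (1/r)"
    by (rule jensen_sum[OF finite_signs _ _ T]) (use r in \<open>auto simp: nrm_nonneg\<close>)
  also have "(2 ^ m * (r powr (r/2) * real m powr (r/2) * B powr r)) powr (1/r)
      = (2 ^ m) powr (1/r) * (sqrt r * sqrt m * B)"
    using r B by (simp add: powr_mult powr_powr powr_half_sqrt)
  also have "real (card (signs m)) powr (1 - 1/r) * ((2 ^ m) powr (1/r) * (sqrt r * sqrt m * B))
      = (2 ^ m) powr (1 - 1/r + 1/r) * (sqrt r * sqrt m * B)"
    by (simp add: card_signs powr_add[symmetric])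
  also have "(2 ^ m :: real) powr (1 - 1/r + 1/r) = 2 ^ m" by simp
  finally show ?thesis unfolding U_def by (simp add: mult.assoc)
qed

lemma abs_powr_sq: assumes "r > 0" shows "(\<bar>x::real\<bar> powr r) powr (2/r) = x\<^sup>2"
proof (cases "x = 0")
  case True then show ?thesis by simp
next
  case False
  have "(\<bar>x\<bar> powr r) powr (2/r) = \<bar>x\<bar> powr 2" using assms by (simp only: powr_powr) simp
  also have "\<dots> = x\<^sup>2" using False by (simp add: powr_realpow[of "\<bar>x\<bar>" 2, simplified])
  finally show ?thesis .
qed

lemma vec_rad_small:
  fixes w :: "nat \<Rightarrow> 'i \<Rightarrow> real"
  assumes S: "finite S" and r1: "r \<ge> 1" and r2: "r \<le> 2" and m: "m \<ge> 1"
    and wB: "\<forall>i<m. nrm r S (\<lambda>z. \<bar>w i z\<bar>) \<le> B"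
  shows "(\<Sum>e\<in>signs m. nrm r S (\<lambda>z. \<bar>\<Sum>i<m. e ! i * w i z\<bar>)) \<le> 2 ^ m * real m powr (1/r) * B"
proof -
  have B: "B \<ge> 0" using wB m nrm_nonneg[of r S "\<lambda>z. \<bar>w 0 z\<bar>"] by force
  define U where "U e z = (\<Sum>i<m. e ! i * w i z)" for e z
  have pz: "(\<Sum>e\<in>signs m. \<bar>U e z\<bar> powr r) \<le> 2 ^ m * (\<Sum>i<m. \<bar>w i z\<bar> powr r)" for z
  proof -
    have "(\<Sum>e\<in>signs m. \<bar>U e z\<bar> powr r)
        \<le> real (card (signs m)) powr (1 - 1/(2/r)) * nrm (2/r) (signs m) (\<lambda>e. \<bar>U e z\<bar> powr r)"
      by (rule sum_le_card_nrm) (use r1 r2 finite_signs in auto)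
    also have "nrm (2/r) (signs m) (\<lambda>e. \<bar>U e z\<bar> powr r) = (\<Sum>e\<in>signs m. (U e z)\<^sup>2) powr (r/2)"
      unfolding nrm_def using r1 abs_powr_sq[of r] by simp
    also have "(\<Sum>e\<in>signs m. (U e z)\<^sup>2) = 2 ^ m * (\<Sum>i<m. (w i z)\<^sup>2)"
      unfolding U_def by (rule second_moment)
    also have "(2 ^ m * (\<Sum>i<m. (w i z)\<^sup>2)) powr (r/2) = (2 ^ m) powr (r/2) * (\<Sum>i<m. (w i z)\<^sup>2) powr (r/2)"
      by (simp add: powr_mult sum_nonneg)
    also have "real (card (signs m)) powr (1 - 1/(2/r)) * ((2 ^ m) powr (r/2) * (\<Sum>i<m. (w i z)\<^sup>2) powr (r/2))
        = 2 ^ m * (\<Sum>i<m. (w i z)\<^sup>2) powr (r/2)"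
    proof -
      have "real (card (signs m)) powr (1 - 1/(2/r)) * (2 ^ m) powr (r/2) = (2 ^ m) powr (1 - 1/(2/r) + r/2)"
        by (simp add: card_signs powr_add[symmetric])
      also have "1 - 1/(2/r) + r/2 = 1" by simp
      finally show ?thesis by simp
    qed
    also have "(\<Sum>i<m. (w i z)\<^sup>2) powr (r/2) \<le> (\<Sum>i<m. ((w i z)\<^sup>2) powr (r/2))"
      by (rule subadd_powr) (use r1 r2 in auto)
    also have "(\<Sum>i<m. ((w i z)\<^sup>2) powr (r/2)) = (\<Sum>i<m. \<bar>w i z\<bar> powr r)"
      by (intro sum.cong refl sq_powr)
    finally show ?thesis by simp
  qed
  have "(\<Sum>e\<in>signs m. nrm r S (\<lambda>z. \<bar>U e z\<bar>) powr r) = (\<Sum>e\<in>signs m. \<Sum>z\<in>S. \<bar>U e z\<bar> powr r)"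
    using r1 by (intro sum.cong refl nrm_pow) auto
  also have "\<dots> = (\<Sum>z\<in>S. \<Sum>e\<in>signs m. \<bar>U e z\<bar> powr r)" by (rule sum.swap)
  also have "\<dots> \<le> (\<Sum>z\<in>S. 2 ^ m * (\<Sum>i<m. \<bar>w i z\<bar> powr r))"
    by (intro sum_mono pz)
  also have "\<dots> = 2 ^ m * (\<Sum>i<m. \<Sum>z\<in>S. \<bar>w i z\<bar> powr r)"
    by (simp add: sum_distrib_left sum.swap[of _ S])
  also have "\<dots> \<le> 2 ^ m * (\<Sum>i<m. B powr r)"
  proof (intro mult_left_mono sum_mono)
    fix i assume "i \<in> {..<m}"
    hence "nrm r S (\<lambda>z. \<bar>w i z\<bar>) powr r \<le> B powr r" using wB r1 by (intro powr_mono2) (auto simp: nrm_nonneg)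
    thus "(\<Sum>z\<in>S. \<bar>w i z\<bar> powr r) \<le> B powr r" using nrm_pow[of r S "\<lambda>z. \<bar>w i z\<bar>"] r1 by simp
  qed simp
  also have "\<dots> = 2 ^ m * (real m * B powr r)" by simp
  finally have T: "(\<Sum>e\<in>signs m. nrm r S (\<lambda>z. \<bar>U e z\<bar>) powr r) \<le> 2 ^ m * (real m * B powr r)" .
  have "(\<Sum>e\<in>signs m. nrm r S (\<lambda>z. \<bar>U e z\<bar>))
     \<le> real (card (signs m)) powr (1 - 1/r) * (2 ^ m * (real m * B powr r)) powr (1/r)"
    by (rule jensen_sum[OF finite_signs _ _ T]) (use r1 in \<open>auto simp: nrm_nonneg\<close>)
  also have "(2 ^ m * (real m * B powr r)) powr (1/r) = (2 ^ m) powr (1/r) * (real m powr (1/r) * B)"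
    using r1 B by (simp add: powr_mult powr_powr)
  also have "real (card (signs m)) powr (1 - 1/r) * ((2 ^ m) powr (1/r) * (real m powr (1/r) * B))
      = (2 ^ m) powr (1 - 1/r + 1/r) * (real m powr (1/r) * B)"
    by (simp add: card_signs powr_add[symmetric])
  also have "(2 ^ m :: real) powr (1 - 1/r + 1/r) = 2 ^ m" by simp
  finally show ?thesis unfolding U_def by (simp add: mult.assoc)
qed


lemma bit_shift_low:
  fixes j :: nat assumes "k < n"
  shows "(j + 2 ^ n) div 2 ^ k mod 2 = j div 2 ^ k mod 2"
proof -
  have "(2::nat) ^ n = 2 ^ k * 2 ^ (n - k)" using assms by (simp flip: power_add)
  hence "(j + 2 ^ n) div 2 ^ k = j div 2 ^ k + 2 ^ (n - k)" by simp
  moreover have "even ((2::nat) ^ (n - k))" using assms by simp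
  ultimately show ?thesis by (simp add: mod_add_right_eq[symmetric] even_iff_mod_2_eq_zero)
qed

lemma sum_split_double:
  "(\<Sum>i<N + N. F i) = (\<Sum>j<(N::nat). F j) + (\<Sum>j<N. F (j + N) :: 'a::comm_monoid_add)"
proof -
  have "(\<Sum>i<N + N. F i) = sum F {0..<N} + sum F {N..<N + N}"
    by (simp add: sum.atLeastLessThan_concat lessThan_atLeast0)
  also have "sum F {N..<N + N} = (\<Sum>j<N. F (j + N))"
    using sum.shift_bounds_nat_ivl[of F 0 N N] by (simp add: lessThan_atLeast0)
  finally show ?thesis by (simp add: lessThan_atLeast0)
qed

lemma sum_bits_prod:
  fixes g :: "nat \<Rightarrow> nat \<Rightarrow> 'a::comm_semiring_1"
  shows "(\<Sum>i<2 ^ n. \<Prod>k<n. g k (i div 2 ^ k mod 2)) = (\<Prod>k<n. (g k 0 + g k 1 :: 'a::comm_semiring_1))"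
proof (induction n)
  case 0
  show ?case by simp
next
  case (Suc n)
  let ?F = "\<lambda>n i. \<Prod>k<n. g k (i div 2 ^ k mod 2)"
  have lo: "?F (Suc n) j = ?F n j * g n 0" if "j < 2 ^ n" for j
    using that by simp
  have hi: "?F (Suc n) (j + 2 ^ n) = ?F n j * g n 1" if "j < 2 ^ n" for j
  proof -
    have "(j + 2 ^ n) div 2 ^ n = 1" using that by simp
    moreover have "?F n (j + 2 ^ n) = ?F n j" by (intro prod.cong refl) (simp add: bit_shift_low)
    ultimately show ?thesis by simp
  qed
  have e: "(2::nat) ^ Suc n = 2 ^ n + 2 ^ n" by simp
  have "(\<Sum>i<2 ^ Suc n. ?F (Suc n) i) = (\<Sum>j<2 ^ n. ?F (Suc n) j) + (\<Sum>j<2 ^ n. ?F (Suc n) (j + 2 ^ n))"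
    unfolding e by (rule sum_split_double)
  also have "\<dots> = (\<Sum>j<2 ^ n. ?F n j * g n 0) + (\<Sum>j<2 ^ n. ?F n j * g n 1)"
    using lo hi by (intro arg_cong2[where f="(+)"] sum.cong) auto
  also have "\<dots> = (\<Prod>k<n. (g k 0 + g k 1)) * (g n 0 + g n 1)"
    using Suc by (simp add: sum_distrib_right[symmetric] distrib_left)
  finally show ?case by simp
qed

lemma pstrings_0: "pstrings 0 = {[]}" by (auto simp: pstrings_def)

lemma pstrings_Suc: "pstrings (Suc n) = (\<lambda>(z, a). z @ [a]) ` (pstrings n \<times> {0..<4})"
proof
  show "pstrings (Suc n) \<subseteq> (\<lambda>(z, a). z @ [a]) ` (pstrings n \<times> {0..<4})"
  proof
    fix y assume y: "y \<in> pstrings (Suc n)"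
    hence l: "length y = Suc n" and st: "set y \<subseteq> {0..<4}" by (auto simp: pstrings_def)
    from l obtain z a where za: "y = z @ [a]" "length z = n" by (auto simp: length_Suc_conv_rev)
    show "y \<in> (\<lambda>(z, a). z @ [a]) ` (pstrings n \<times> {0..<4})"
      by (rule image_eqI[of _ _ "(z, a)"]) (use za st in \<open>auto simp: pstrings_def\<close>)
  qed
qed (auto simp: pstrings_def)

lemma finite_pstrings: "finite (pstrings n)"
  by (induction n) (auto simp: pstrings_Suc pstrings_0)

lemma sum_pstrings_prod:
  fixes g :: "nat \<Rightarrow> nat \<Rightarrow> 'a::comm_semiring_1"
  shows "(\<Sum>z\<in>pstrings n. \<Prod>k<n. g k (z ! k)) = (\<Prod>k<n. (\<Sum>a<4. g k a :: 'a::comm_semiring_1))"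
proof (induction n)
  case 0 then show ?case by (simp add: pstrings_0)
next
  case (Suc n)
  have inj: "inj_on (\<lambda>(z, a). z @ [a]) (pstrings n \<times> {0..<4::nat})" by (auto simp: inj_on_def)
  have "(\<Sum>z\<in>pstrings (Suc n). \<Prod>k<Suc n. g k (z ! k))
      = (\<Sum>p\<in>pstrings n \<times> {0..<4}. \<Prod>k<Suc n. g k ((fst p @ [snd p]) ! k))"
    unfolding pstrings_Suc by (subst sum.reindex[OF inj]) (auto intro!: sum.cong)
  also have "\<dots> = (\<Sum>(z,a)\<in>pstrings n \<times> {0..<4}. (\<Prod>k<n. g k (z ! k)) * g n a)"
    by (rule sum.cong) (auto simp: pstrings_def nth_append)
  also have "\<dots> = (\<Sum>z\<in>pstrings n. \<Sum>a<4. (\<Prod>k<n. g k (z ! k)) * g n a)"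
    by (simp add: sum.cartesian_product lessThan_atLeast0)
  also have "\<dots> = (\<Prod>k<n. (\<Sum>a<4. g k a)) * (\<Sum>a<4. g n a)"
    using Suc by (simp add: sum_distrib_left[symmetric] sum_distrib_right[symmetric])
  finally show ?case by simp
qed

lemma bits_eq_imp_eq:
  fixes i j :: nat
  assumes "i < 2 ^ n" "j < 2 ^ n" "\<forall>k<n. i div 2 ^ k mod 2 = j div 2 ^ k mod 2"
  shows "i = j"
  using assms
proof (induction n arbitrary: i j)
  case 0 then show ?case by simp
next
  case (Suc n)
  have "i mod 2 = j mod 2" using Suc.prems(3)[rule_format, of 0] by simp
  moreover have "i div 2 = j div 2"
  proof (rule Suc.IH)
    show "i div 2 < 2 ^ n" "j div 2 < 2 ^ n" using Suc.prems by auto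
    show "\<forall>k<n. i div 2 div 2 ^ k mod 2 = j div 2 div 2 ^ k mod 2"
      using Suc.prems(3) by (auto simp: div_mult2_eq[symmetric] mult.commute)
  qed
  ultimately show ?case by (metis div_mult_mod_eq)
qed

lemma bit_lt2: "(i::nat) div 2 ^ k mod 2 < 2" by simp

lemma two_cases: "(r::nat) < 2 \<Longrightarrow> r = 0 \<or> r = 1" by auto

lemma sum4: "(\<Sum>a<(4::nat). f a) = f 0 + f 1 + f 2 + (f 3 :: complex)"
  by (simp add: eval_nat_numeral)
lemma sigma_compl:
  assumes "r < 2" "s < 2" "r' < 2" "s' < 2"
  shows "(\<Sum>a<4. Defs.sigma a r s * Defs.sigma a r' s') = (if r = s' \<and> s = r' then 2 else 0)"
  unfolding sum4
  using two_cases[OF assms(1)] two_cases[OF assms(2)] two_cases[OF assms(3)] two_cases[OF assms(4)]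
  by (elim disjE) (simp_all add: Defs.sigma_def)
lemma sigma_tr: "a < 4 \<Longrightarrow> Defs.sigma a 0 0 + Defs.sigma a 1 1 = (if a = 0 then 2 else 0)"
  by (auto simp: Defs.sigma_def)

lemma sigma_cnj: "cnj (Defs.sigma a r s) = Defs.sigma a s r"
  by (auto simp: Defs.sigma_def)

lemma pauli_car[simp]: "pauli n z \<in> carrier_mat (2^n) (2^n)" by (simp add: pauli_def)
lemma pauli_dim[simp]: "dim_row (pauli n z) = 2^n" "dim_col (pauli n z) = 2^n" by (simp_all add: pauli_def)

lemma pauli_idx: "i < 2^n \<Longrightarrow> j < 2^n \<Longrightarrow>
   pauli n z $$ (i,j) = (\<Prod>k<n. Defs.sigma (z!k) (i div 2^k mod 2) (j div 2^k mod 2))"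
  by (simp add: pauli_def)

lemma bits_differ:
  fixes i j :: nat
  assumes "i < 2^n" "j < 2^n" "i \<noteq> j"
  shows "\<exists>k<n. i div 2^k mod 2 \<noteq> j div 2^k mod 2"
  using bits_eq_imp_eq[OF assms(1,2)] assms(3) by blast

lemma pauli_id: "pauli n (replicate n 0) = 1\<^sub>m (2^n)"
proof (rule eq_matI)
  fix i j assume ij: "i < dim_row (1\<^sub>m (2^n))" "j < dim_col (1\<^sub>m (2^n))"
  hence i: "i < 2^n" and j: "j < 2^n" by auto
  have "pauli n (replicate n 0) $$ (i, j) = (\<Prod>k<n. Defs.sigma 0 (i div 2^k mod 2) (j div 2^k mod 2))"
    using i j by (simp add: pauli_idx)
  also have "\<dots> = (if i = j then 1 else 0)"
  proof (cases "i = j")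
    case True then show ?thesis by (simp add: Defs.sigma_def)
  next
    case False
    then obtain k where "k < n" "i div 2^k mod 2 \<noteq> j div 2^k mod 2" using bits_differ i j by blast
    thus ?thesis using False by (intro prod_zero[THEN trans]) (auto simp: Defs.sigma_def)
  qed
  finally show "pauli n (replicate n 0) $$ (i, j) = 1\<^sub>m (2^n) $$ (i, j)" using i j by simp
qed (auto simp: pauli_def)

lemma mtrace_mult:
  assumes "A \<in> carrier_mat d d" "B \<in> carrier_mat d d"
  shows "mtrace (A * B) = (\<Sum>i<d. \<Sum>j<d. A $$ (i,j) * B $$ (j,i))"
  using assms by (auto simp: mtrace_def scalar_prod_def lessThan_atLeast0 intro!: sum.cong)

lemma nz_exists:
  assumes "z \<in> nzstrings n" shows "\<exists>k<n. z ! k \<noteq> 0"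
proof (rule ccontr)
  assume "\<not> ?thesis"
  hence "z = replicate n 0" using assms by (intro nth_equalityI) (auto simp: nzstrings_def pstrings_def)
  thus False using assms by (simp add: nzstrings_def)
qed

lemma pauli_trace:
  assumes "z \<in> nzstrings n" shows "mtrace (pauli n z) = 0"
proof -
  have "mtrace (pauli n z) = (\<Sum>i<2^n. \<Prod>k<n. Defs.sigma (z!k) (i div 2^k mod 2) (i div 2^k mod 2))"
    by (auto simp: mtrace_def pauli_idx intro!: sum.cong)
  also have "\<dots> = (\<Prod>k<n. Defs.sigma (z!k) 0 0 + Defs.sigma (z!k) 1 1)"
    by (rule sum_bits_prod[where g="\<lambda>k b. Defs.sigma (z!k) b b"])
  also have "\<dots> = 0"
  proof -
    obtain k where k: "k < n" "z ! k \<noteq> 0" using nz_exists[OF assms] by blast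
    have zs: "z \<in> pstrings n" using assms by (simp add: nzstrings_def)
    hence "z ! k \<in> set z" using k by (simp add: pstrings_def)
    hence "z ! k < 4" using zs by (auto simp: pstrings_def)
    hence "Defs.sigma (z!k) 0 0 + Defs.sigma (z!k) 1 1 = 0" using k sigma_tr by simp
    thus ?thesis using k by (intro prod_zero) auto
  qed
  finally show ?thesis .
qed

lemma pauli_herm:
  assumes "i < 2^n" "j < 2^n"
  shows "cnj (pauli n z $$ (i,j)) = pauli n z $$ (j,i)"
  using assms by (simp add: pauli_idx sigma_cnj cnj_prod)

lemma pauli_compl:
  assumes "i < 2^n" "j < 2^n" "k < 2^n" "l < 2^n"
  shows "(\<Sum>z\<in>pstrings n. pauli n z $$ (i,j) * pauli n z $$ (k,l)) = (if i = l \<and> j = k then 2^n else 0)"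
proof -
  let ?b = "\<lambda>x t. x div 2^t mod 2"
  have "(\<Sum>z\<in>pstrings n. pauli n z $$ (i,j) * pauli n z $$ (k,l))
      = (\<Sum>z\<in>pstrings n. \<Prod>t<n. Defs.sigma (z!t) (?b i t) (?b j t) * Defs.sigma (z!t) (?b k t) (?b l t))"
    using assms by (simp add: pauli_idx prod.distrib)
  also have "\<dots> = (\<Prod>t<n. \<Sum>a<4. Defs.sigma a (?b i t) (?b j t) * Defs.sigma a (?b k t) (?b l t))"
    by (rule sum_pstrings_prod[where g="\<lambda>t a. Defs.sigma a (?b i t) (?b j t) * Defs.sigma a (?b k t) (?b l t)"])
  also have "\<dots> = (\<Prod>t<n. if ?b i t = ?b l t \<and> ?b j t = ?b k t then 2 else 0)"
    by (intro prod.cong refl sigma_compl) auto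
  also have "\<dots> = (if i = l \<and> j = k then 2^n else 0)"
  proof (cases "i = l \<and> j = k")
    case True then show ?thesis by simp
  next
    case False
    then obtain t where "t < n" "?b i t \<noteq> ?b l t \<or> ?b j t \<noteq> ?b k t"
      using bits_differ assms by blast
    then show ?thesis using False by (intro prod_zero[THEN trans]) auto
  qed
  finally show ?thesis .
qed

lemma dsum_delta:
  assumes "k < (N::nat)" "l < N"
  shows "(\<Sum>i<N. \<Sum>j<N. if i = l \<and> j = k then c else 0) = (c::'a::comm_monoid_add)"
proof -
  have "(\<Sum>j<N. if i = l \<and> j = k then c else 0) = (if i = l then c else 0)" for i
    using assms by (cases "i = l") simp_all
  hence "(\<Sum>i<N. \<Sum>j<N. if i = l \<and> j = k then c else 0) = (\<Sum>i<N. if i = l then c else 0)" by simp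
  also have "\<dots> = c" using assms by (subst sum.delta) auto
  finally show ?thesis .
qed

lemma pauli_complete:
  assumes A: "A \<in> carrier_mat (2^n) (2^n)" and kl: "k < 2^n" "l < 2^n"
  shows "(\<Sum>z\<in>pstrings n. (mtrace (pauli n z * A) / 2^n) * pauli n z $$ (k,l)) = A $$ (k,l)"
proof -
  have "(\<Sum>z\<in>pstrings n. (mtrace (pauli n z * A) / 2^n) * pauli n z $$ (k,l))
     = (\<Sum>z\<in>pstrings n. \<Sum>i<2^n. \<Sum>j<2^n. A $$ (j,i) * (pauli n z $$ (i,j) * pauli n z $$ (k,l)) / 2^n)"
  proof (rule sum.cong[OF refl])
    fix z
    show "(mtrace (pauli n z * A) / 2^n) * pauli n z $$ (k,l)
       = (\<Sum>i<2^n. \<Sum>j<2^n. A $$ (j,i) * (pauli n z $$ (i,j) * pauli n z $$ (k,l)) / 2^n)"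
      unfolding mtrace_mult[OF pauli_car A] sum_divide_distrib sum_distrib_right
      by (intro sum.cong refl) (simp add: mult_ac)
  qed
  also have "\<dots> = (\<Sum>i<2^n. \<Sum>j<2^n. A $$ (j,i) * (\<Sum>z\<in>pstrings n. pauli n z $$ (i,j) * pauli n z $$ (k,l)) / 2^n)"
    by (simp add: sum.swap[of _ "pstrings n"] sum_distrib_left sum_divide_distrib)
  also have "\<dots> = (\<Sum>i<2^n. \<Sum>j<2^n. A $$ (j,i) * (if i = l \<and> j = k then 2^n else 0) / 2^n)"
    using kl by (intro sum.cong refl) (simp add: pauli_compl)
  also have "\<dots> = A $$ (k,l)"
  proof -
    have "A $$ (j,i) * (if i = l \<and> j = k then 2^n else 0) / 2^n = (if i = l \<and> j = k then A $$ (k,l) else 0)" for i j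
      by auto
    thus ?thesis using kl by (simp only: dsum_delta)
  qed
  finally show ?thesis .
qed


definition msum :: "nat \<Rightarrow> ('a \<Rightarrow> complex mat) \<Rightarrow> 'a set \<Rightarrow> complex mat" where
  "msum d f X = Matrix.mat d d (\<lambda>(i,j). \<Sum>x\<in>X. f x $$ (i,j))"

lemma msum_car[simp]: "msum d f X \<in> carrier_mat d d" by (simp add: msum_def)
lemma msum_dim[simp]: "dim_row (msum d f X) = d" "dim_col (msum d f X) = d" by (simp_all add: msum_def)

lemma msum_idx: "i < d \<Longrightarrow> j < d \<Longrightarrow> msum d f X $$ (i,j) = (\<Sum>x\<in>X. f x $$ (i,j))"
  by (simp add: msum_def)

lemma msum_empty: "msum d f {} = 0\<^sub>m d d"
  by (rule eq_matI) (auto simp: msum_def)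

lemma msum_insert:
  assumes "finite X" "x \<notin> X" "f x \<in> carrier_mat d d"
  shows "msum d f (insert x X) = f x + msum d f X"
  by (rule eq_matI) (use assms in \<open>auto simp: msum_def\<close>)

lemma msum_cong: "(\<And>x. x \<in> X \<Longrightarrow> f x = g x) \<Longrightarrow> msum d f X = msum d g X"
  by (simp add: msum_def)

lemma qc_props:
  assumes "quantum_channel n \<Phi>"
  shows "\<And>A. A \<in> carrier_mat (2^n) (2^n) \<Longrightarrow> \<Phi> A \<in> carrier_mat (2^n) (2^n)"
    and "\<And>A B. A \<in> carrier_mat (2^n) (2^n) \<Longrightarrow> B \<in> carrier_mat (2^n) (2^n) \<Longrightarrow> \<Phi> (A + B) = \<Phi> A + \<Phi> B"
    and "\<And>A c. A \<in> carrier_mat (2^n) (2^n) \<Longrightarrow> \<Phi> (c \<cdot>\<^sub>m A) = c \<cdot>\<^sub>m \<Phi> A"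
    and "\<And>A. A \<in> carrier_mat (2^n) (2^n) \<Longrightarrow> mtrace (\<Phi> A) = mtrace A"
  using assms unfolding quantum_channel_def Let_def by auto

lemma qc_zero:
  assumes "quantum_channel n \<Phi>"
  shows "\<Phi> (0\<^sub>m (2^n) (2^n)) = 0\<^sub>m (2^n) (2^n)"
proof -
  have z: "0\<^sub>m (2^n) (2^n) = (0::complex) \<cdot>\<^sub>m 0\<^sub>m (2^n) (2^n)" by (rule eq_matI) auto
  have c: "\<Phi> (0\<^sub>m (2^n) (2^n)) \<in> carrier_mat (2^n) (2^n)" using qc_props(1)[OF assms] by simp
  have "\<Phi> (0\<^sub>m (2^n) (2^n)) = 0 \<cdot>\<^sub>m \<Phi> (0\<^sub>m (2^n) (2^n))"
    by (subst z) (rule qc_props(3)[OF assms], simp)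
  also have "\<dots> = 0\<^sub>m (2^n) (2^n)" using c by (intro eq_matI) auto
  finally show ?thesis .
qed

lemma channel_msum:
  assumes qc: "quantum_channel n \<Phi>" and X: "finite X" and f: "\<forall>x\<in>X. f x \<in> carrier_mat (2^n) (2^n)"
  shows "\<Phi> (msum (2^n) f X) = msum (2^n) (\<lambda>x. \<Phi> (f x)) X"
  using X f
proof (induction X rule: finite_induct)
  case empty then show ?case by (simp add: msum_empty qc_zero[OF qc])
next
  case (insert x X)
  have "\<Phi> (msum (2^n) f (insert x X)) = \<Phi> (f x + msum (2^n) f X)"
    using insert by (simp add: msum_insert)
  also have "\<dots> = \<Phi> (f x) + \<Phi> (msum (2^n) f X)" using insert by (intro qc_props(2)[OF qc]) auto
  also have "\<dots> = msum (2^n) (\<lambda>x. \<Phi> (f x)) (insert x X)"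
    using insert qc_props(1)[OF qc] by (simp add: msum_insert)
  finally show ?case .
qed

lemma pauli_expand:
  assumes "A \<in> carrier_mat (2^n) (2^n)"
  shows "A = msum (2^n) (\<lambda>z. fI_hat n A z \<cdot>\<^sub>m pauli n z) (pstrings n)"
proof (rule eq_matI)
  fix i j assume ij: "i < dim_row (msum (2^n) (\<lambda>z. fI_hat n A z \<cdot>\<^sub>m pauli n z) (pstrings n))"
    "j < dim_col (msum (2^n) (\<lambda>z. fI_hat n A z \<cdot>\<^sub>m pauli n z) (pstrings n))"
  hence "i < 2^n" "j < 2^n" by auto
  thus "A $$ (i, j) = msum (2^n) (\<lambda>z. fI_hat n A z \<cdot>\<^sub>m pauli n z) (pstrings n) $$ (i, j)"
    using pauli_complete[OF assms, of i j] by (simp add: msum_idx fI_hat_def)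
qed (use assms in auto)

lemma mtrace_msum_right:
  assumes "B \<in> carrier_mat d d" "\<forall>x\<in>X. g x \<in> carrier_mat d d"
  shows "mtrace (B * msum d g X) = (\<Sum>x\<in>X. mtrace (B * g x))"
proof -
  have "mtrace (B * msum d g X) = (\<Sum>i<d. \<Sum>j<d. B $$ (i,j) * (\<Sum>x\<in>X. g x $$ (j,i)))"
    using assms by (simp add: mtrace_mult msum_idx)
  also have "\<dots> = (\<Sum>x\<in>X. \<Sum>i<d. \<Sum>j<d. B $$ (i,j) * g x $$ (j,i))"
    by (simp add: sum_distrib_left sum.swap[of _ X])
  also have "\<dots> = (\<Sum>x\<in>X. mtrace (B * g x))"
    using assms by (intro sum.cong refl) (simp add: mtrace_mult[OF assms(1)])
  finally show ?thesis .
qed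

lemma mtrace_msum_left:
  assumes "H \<in> carrier_mat d d" "\<forall>x\<in>X. g x \<in> carrier_mat d d"
  shows "mtrace (msum d g X * H) = (\<Sum>x\<in>X. mtrace (g x * H))"
proof -
  have "mtrace (msum d g X * H) = (\<Sum>i<d. \<Sum>j<d. (\<Sum>x\<in>X. g x $$ (i,j)) * H $$ (j,i))"
    by (subst mtrace_mult[OF msum_car assms(1)]) (auto intro!: sum.cong simp: msum_idx)
  also have "\<dots> = (\<Sum>x\<in>X. \<Sum>i<d. \<Sum>j<d. g x $$ (i,j) * H $$ (j,i))"
    by (simp add: sum_distrib_right sum.swap[of _ X])
  also have "\<dots> = (\<Sum>x\<in>X. mtrace (g x * H))"
    using assms by (intro sum.cong refl) (simp add: mtrace_mult[OF _ assms(1)])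
  finally show ?thesis .
qed

lemma mtrace_smult_right:
  assumes "B \<in> carrier_mat d d" "M \<in> carrier_mat d d"
  shows "mtrace (B * (c \<cdot>\<^sub>m M)) = c * mtrace (B * M)"
  using assms by (simp add: mtrace_mult sum_distrib_left mult_ac)

lemma mtrace_smult_left:
  assumes "H \<in> carrier_mat d d" "M \<in> carrier_mat d d"
  shows "mtrace ((c \<cdot>\<^sub>m M) * H) = c * mtrace (M * H)"
  using assms mtrace_mult[of "c \<cdot>\<^sub>m M" d H] mtrace_mult[OF assms(2) assms(1)] by (simp add: sum_distrib_left mult_ac)

lemma zero_pstring: "replicate n 0 \<in> pstrings n" by (cases n) (auto simp: pstrings_def)

lemma pstrings_split: "pstrings n = insert (replicate n 0) (nzstrings n)"
  using zero_pstring by (auto simp: nzstrings_def)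

lemma finite_nzstrings: "finite (nzstrings n)"
  using finite_pstrings by (simp add: nzstrings_def)

lemma layer:
  assumes u: "unital_channel n \<Phi>" and A: "A \<in> carrier_mat (2^n) (2^n)" and z: "z \<in> nzstrings n"
  shows "fI_hat n (\<Phi> A) z = (\<Sum>x\<in>nzstrings n. repM n \<Phi> z x * fI_hat n A x)"
proof -
  have qc: "quantum_channel n \<Phi>" and un: "\<Phi> (1\<^sub>m (2^n)) = 1\<^sub>m (2^n)" using u by (auto simp: unital_channel_def)
  have "\<Phi> A = \<Phi> (msum (2^n) (\<lambda>x. fI_hat n A x \<cdot>\<^sub>m pauli n x) (pstrings n))"
    using pauli_expand[OF A] by simp
  also have "\<dots> = msum (2^n) (\<lambda>x. \<Phi> (fI_hat n A x \<cdot>\<^sub>m pauli n x)) (pstrings n)"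
    by (rule channel_msum[OF qc finite_pstrings]) auto
  also have "\<dots> = msum (2^n) (\<lambda>x. fI_hat n A x \<cdot>\<^sub>m \<Phi> (pauli n x)) (pstrings n)"
    by (rule msum_cong) (simp add: qc_props(3)[OF qc])
  finally have PA: "\<Phi> A = msum (2^n) (\<lambda>x. fI_hat n A x \<cdot>\<^sub>m \<Phi> (pauli n x)) (pstrings n)" .
  have car: "\<Phi> (pauli n x) \<in> carrier_mat (2^n) (2^n)" for x using qc_props(1)[OF qc] by simp
  have mt: "mtrace (pauli n z * \<Phi> A) = (\<Sum>x\<in>pstrings n. fI_hat n A x * mtrace (pauli n z * \<Phi> (pauli n x)))"
    unfolding PA by (subst mtrace_msum_right[of _ "2^n"]) (auto intro!: sum.cong simp: car mtrace_smult_right[OF pauli_car car])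
  have "fI_hat n (\<Phi> A) z = (\<Sum>x\<in>pstrings n. fI_hat n A x * mtrace (pauli n z * \<Phi> (pauli n x))) / 2^n"
    using mt by (simp add: fI_hat_def)
  also have "\<dots> = (\<Sum>x\<in>pstrings n. repM n \<Phi> z x * fI_hat n A x)"
    by (simp add: repM_def sum_divide_distrib mult_ac)
  also have "\<dots> = repM n \<Phi> z (replicate n 0) * fI_hat n A (replicate n 0) + (\<Sum>x\<in>nzstrings n. repM n \<Phi> z x * fI_hat n A x)"
    unfolding pstrings_split by (rule sum.insert) (auto simp: finite_nzstrings nzstrings_def finite_pstrings)
  also have "repM n \<Phi> z (replicate n 0) = 0"
    unfolding repM_def pauli_id un using pauli_trace[OF z] by simp
  finally show ?thesis by simp
qed

lemma trace_H:
  assumes B: "B \<in> carrier_mat (2^n) (2^n)" and H: "H \<in> carrier_mat (2^n) (2^n)" and tH: "mtrace H = 0"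
  shows "mtrace (B * H) = (\<Sum>z\<in>nzstrings n. fI_hat n B z * mtrace (pauli n z * H))"
proof -
  have "mtrace (B * H) = mtrace (msum (2^n) (\<lambda>z. fI_hat n B z \<cdot>\<^sub>m pauli n z) (pstrings n) * H)"
    using pauli_expand[OF B] by simp
  also have "\<dots> = (\<Sum>z\<in>pstrings n. fI_hat n B z * mtrace (pauli n z * H))"
    using H by (subst mtrace_msum_left[of _ "2^n"]) (auto simp: mtrace_smult_left)
  also have "\<dots> = fI_hat n B (replicate n 0) * mtrace (pauli n (replicate n 0) * H) + (\<Sum>z\<in>nzstrings n. fI_hat n B z * mtrace (pauli n z * H))"
    unfolding pstrings_split by (rule sum.insert) (auto simp: finite_nzstrings nzstrings_def finite_pstrings)
  also have "mtrace (pauli n (replicate n 0) * H) = 0" using H tH by (simp add: pauli_id)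
  finally show ?thesis by simp
qed

definition step :: "nat \<Rightarrow> (complex mat \<Rightarrow> complex mat) \<Rightarrow> (nat list \<Rightarrow> complex) \<Rightarrow> nat list \<Rightarrow> complex" where
  "step n \<Phi> v = (\<lambda>z. \<Sum>x\<in>nzstrings n. repM n \<Phi> z x * v x)"

definition iter :: "nat \<Rightarrow> (complex mat \<Rightarrow> complex mat) list \<Rightarrow> (nat list \<Rightarrow> complex) \<Rightarrow> nat list \<Rightarrow> complex" where
  "iter n cs v = fold (step n) cs v"

lemma apply_circuit_Nil[simp]: "apply_circuit [] A = A" by (simp add: apply_circuit_def)
lemma apply_circuit_Cons[simp]: "apply_circuit (\<Phi> # cs) A = apply_circuit cs (\<Phi> A)" by (simp add: apply_circuit_def)
lemma iter_Nil[simp]: "iter n [] v = v" by (simp add: iter_def)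
lemma iter_Cons[simp]: "iter n (\<Phi> # cs) v = iter n cs (step n \<Phi> v)" by (simp add: iter_def)

lemma circuit_car:
  "(\<forall>\<Phi>\<in>set cs. unital_channel n \<Phi>) \<Longrightarrow> A \<in> carrier_mat (2^n) (2^n) \<Longrightarrow> apply_circuit cs A \<in> carrier_mat (2^n) (2^n)"
proof (induction cs arbitrary: A)
  case Nil then show ?case by simp
next
  case (Cons \<Phi> cs)
  have "\<Phi> A \<in> carrier_mat (2^n) (2^n)" using Cons.prems qc_props(1) by (auto simp: unital_channel_def)
  thus ?case using Cons by simp
qed

lemma circuit_vec:
  "(\<forall>\<Phi>\<in>set cs. unital_channel n \<Phi>) \<Longrightarrow> A \<in> carrier_mat (2^n) (2^n) \<Longrightarrow>
   (\<forall>z\<in>nzstrings n. v z = fI_hat n A z) \<Longrightarrow> z \<in> nzstrings n \<Longrightarrow>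
   iter n cs v z = fI_hat n (apply_circuit cs A) z"
proof (induction cs arbitrary: A v)
  case Nil then show ?case by simp
next
  case (Cons \<Phi> cs)
  have u: "unital_channel n \<Phi>" using Cons.prems by simp
  have car: "\<Phi> A \<in> carrier_mat (2^n) (2^n)" using u Cons.prems qc_props(1) by (auto simp: unital_channel_def)
  have "\<forall>z\<in>nzstrings n. step n \<Phi> v z = fI_hat n (\<Phi> A) z"
    using Cons.prems layer[OF u] by (auto simp: step_def intro!: sum.cong)
  thus ?case using Cons.IH[OF _ car] Cons.prems by simp
qed

lemma step_lin: "step n \<Phi> (\<lambda>z. \<Sum>i<m. c i * v i z) = (\<lambda>z. \<Sum>i<m. c i * step n \<Phi> (v i) z)"
  by (auto simp: step_def sum_distrib_left sum.swap[of _ "nzstrings n"] mult_ac)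

lemma iter_lin: "iter n cs (\<lambda>z. \<Sum>i<m. c i * v i z) = (\<lambda>z. \<Sum>i<m. c i * iter n cs (v i) z)"
proof (induction cs arbitrary: v)
  case Nil then show ?case by simp
next
  case (Cons \<Phi> cs)
  show ?case using Cons.IH[of "\<lambda>i. step n \<Phi> (v i)"] by (simp add: step_lin)
qed

lemma pure_herm: "pure_state n R \<Longrightarrow> hermitian (2^n) R"
proof -
  assume "pure_state n R"
  then obtain v where R: "R = Matrix.mat (2^n) (2^n) (\<lambda>(i, j). v i * cnj (v j))" unfolding pure_state_def by blast
  show ?thesis unfolding hermitian_def R by simp
qed

lemma fI_real:
  assumes "hermitian (2^n) R"
  shows "Im (fI_hat n R z) = 0"
proof -
  have R: "R \<in> carrier_mat (2^n) (2^n)" using assms by (simp add: hermitian_def)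
  have h: "cnj (R $$ (j,i)) = R $$ (i,j)" if "i < 2^n" "j < 2^n" for i j
    using assms that unfolding hermitian_def by (metis complex_cnj_cnj)
  define t where "t = mtrace (pauli n z * R)"
  have t: "t = (\<Sum>i<2^n. \<Sum>j<2^n. pauli n z $$ (i,j) * R $$ (j,i))"
    unfolding t_def by (rule mtrace_mult[OF pauli_car R])
  have "cnj t = (\<Sum>i<2^n. \<Sum>j<2^n. cnj (pauli n z $$ (i,j)) * cnj (R $$ (j,i)))"
    unfolding t by (simp only: cnj_sum complex_cnj_mult)
  also have "\<dots> = (\<Sum>i<2^n. \<Sum>j<2^n. pauli n z $$ (j,i) * R $$ (i,j))"
    by (intro sum.cong refl) (simp add: pauli_herm h)
  also have "\<dots> = t" unfolding t by (subst sum.swap) simp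
  finally have "cnj t = t" .
  hence "Im t = 0" by (metis cnj.simps(2) neg_equal_zero)
  thus ?thesis unfolding fI_hat_def t_def[symmetric] by simp
qed


lemma card_pstrings: "card (pstrings n) = 4 ^ n"
proof -
  have "pstrings n = {xs. set xs \<subseteq> {0..<4} \<and> length xs = n}" by (auto simp: pstrings_def)
  thus ?thesis by (simp add: card_lists_length_eq)
qed

lemma card_nzstrings: "real (card (nzstrings n)) = 4 ^ n - 1"
proof -
  have "card (nzstrings n) = 4 ^ n - 1"
    using card_pstrings zero_pstring finite_pstrings by (simp add: nzstrings_def card_Diff_singleton)
  moreover have "(1::nat) \<le> 4 ^ n" by simp
  ultimately show ?thesis by (simp add: of_nat_diff)
qed

lemma nz_nonempty: assumes "n \<ge> 1" shows "nzstrings n \<noteq> {}"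
proof -
  have "real (card (nzstrings n)) \<ge> 3"
    using assms card_nzstrings[of n] by (simp add: self_le_power)
  thus ?thesis by auto
qed

lemma lpnorm_nrm: "lpnorm p S v = nrm p S (\<lambda>i. cmod (v i))" by (simp add: lpnorm_def nrm_def)

lemma nrm_mono_comp:
  assumes "finite S" "r > 0" "\<forall>i\<in>S. 0 \<le> a i \<and> a i \<le> b i"
  shows "nrm r S a \<le> nrm r S b"
  unfolding nrm_def using assms
  by (intro powr_mono2 sum_mono) (auto intro: sum_nonneg)

lemma nrm_scale:
  assumes "r > 0" "c \<ge> 0" "\<forall>i\<in>S. a i \<ge> 0"
  shows "nrm r S (\<lambda>i. a i * c) = nrm r S a * c"
proof -
  have "(\<Sum>i\<in>S. (a i * c) powr r) = (\<Sum>i\<in>S. a i powr r) * c powr r"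
    using assms by (simp add: powr_mult sum_distrib_right)
  thus ?thesis unfolding nrm_def using assms by (simp add: powr_mult powr_powr sum_nonneg)
qed

lemma nrm_le_const:
  assumes "finite S" "r > 0" "\<forall>i\<in>S. 0 \<le> a i \<and> a i \<le> B"
  shows "nrm r S a \<le> real (card S) powr (1/r) * B"
proof -
  have B: "B \<ge> 0 \<or> S = {}" using assms by auto
  have "nrm r S a \<le> nrm r S (\<lambda>_. B)" by (rule nrm_mono_comp) (use assms in auto)
  also have "\<dots> = real (card S) powr (1/r) * B"
    using B assms by (auto simp: nrm_def powr_mult powr_powr)
  finally show ?thesis .
qed

lemma power_mean_nrm:
  assumes "finite S" "0 < r" "r \<le> q" "\<forall>i\<in>S. a i \<ge> 0"
  shows "nrm r S a \<le> real (card S) powr (1/r - 1/q) * nrm q S a"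
proof -
  have "(\<Sum>i\<in>S. a i powr r) \<le> real (card S) powr (1 - 1/(q/r)) * nrm (q/r) S (\<lambda>i. a i powr r)"
    by (rule sum_le_card_nrm) (use assms in auto)
  also have "nrm (q/r) S (\<lambda>i. a i powr r) = (nrm q S a) powr r"
    using assms unfolding nrm_def by (simp add: powr_powr)
  finally have "(\<Sum>i\<in>S. a i powr r) \<le> real (card S) powr (1 - r/q) * (nrm q S a) powr r" by simp
  hence "(\<Sum>i\<in>S. a i powr r) powr (1/r) \<le> (real (card S) powr (1 - r/q) * (nrm q S a) powr r) powr (1/r)"
    using assms by (intro powr_mono2) (auto intro: sum_nonneg)
  also have "\<dots> = real (card S) powr ((1 - r/q) * (1/r)) * nrm q S a"
    using assms by (simp add: powr_mult powr_powr nrm_nonneg)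
  also have "(1 - r/q) * (1/r) = 1/r - 1/q" using assms by (simp add: field_simps)
  finally show ?thesis unfolding nrm_def .
qed

lemma pstar_cases:
  assumes "p \<ge> 1"
  shows "(p = 1 \<and> pstar p = \<infinity>) \<or> (p > 1 \<and> pstar p = ereal (p / (p - 1)))"
  using assms by (auto simp: pstar_def)

lemma lpnorm_e_nonneg:
  assumes "finite S" "S \<noteq> {}"
  shows "lpnorm_e r S v \<ge> 0"
proof (cases "r = \<infinity>")
  case True
  obtain z where "z \<in> S" using assms by auto
  hence "cmod (v z) \<le> Max ((\<lambda>i. cmod (v i)) ` S)" using assms by (intro Max_ge) auto
  hence "0 \<le> Max ((\<lambda>i. cmod (v i)) ` S)" by (meson order_trans norm_ge_zero)
  thus ?thesis using True unfolding lpnorm_e_def by simp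
qed (simp add: lpnorm_e_def lpnorm_def)

lemma holder_e:
  fixes a b :: "'i \<Rightarrow> complex"
  assumes S: "finite S" "S \<noteq> {}" and p: "p \<ge> 1"
  shows "cmod (\<Sum>z\<in>S. a z * b z) \<le> lpnorm p S a * lpnorm_e (pstar p) S b"
proof -
  have "cmod (\<Sum>z\<in>S. a z * b z) \<le> (\<Sum>z\<in>S. cmod (a z) * cmod (b z))"
    by (rule order_trans[OF norm_sum]) (simp add: norm_mult)
  also have "\<dots> \<le> lpnorm p S a * lpnorm_e (pstar p) S b"
  proof (cases "p = 1")
    case True
    have "(\<Sum>z\<in>S. cmod (a z) * cmod (b z)) \<le> (\<Sum>z\<in>S. cmod (a z) * Max ((\<lambda>i. cmod (b i)) ` S))"
      using S by (intro sum_mono mult_left_mono Max_ge) auto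
    also have "\<dots> = lpnorm p S a * lpnorm_e (pstar p) S b"
      using True by (simp add: lpnorm_e_def pstar_def lpnorm_def sum_distrib_right sum_nonneg)
    finally show ?thesis .
  next
    case False
    hence p1: "p > 1" using p by simp
    define q where "q = p / (p - 1)"
    have q: "q > 1" "1/p + 1/q = 1" using p1 unfolding q_def by (auto simp: field_simps)
    have "(\<Sum>z\<in>S. cmod (a z) * cmod (b z)) \<le> nrm p S (\<lambda>z. cmod (a z)) * nrm q S (\<lambda>z. cmod (b z))"
      by (rule holder) (use S p1 q in auto)
    also have "\<dots> = lpnorm p S a * lpnorm_e (pstar p) S b"
      using False p1 by (simp add: lpnorm_nrm lpnorm_e_def pstar_def q_def)
    finally show ?thesis .
  qed
  finally show ?thesis .
qed

lemma recip_e_nonneg: "q > 0 \<Longrightarrow> recip_e q \<ge> 0"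
  by (cases q) (auto simp: recip_e_def)

lemma rows_nonneg: "lpnorm p S (M z) \<ge> 0" by (simp add: lpnorm_def)

lemma group_norm_nonneg:
  assumes "n \<ge> 1" shows "group_norm n p q M \<ge> 0"
proof (cases "q = \<infinity>")
  case True
  obtain z where z: "z \<in> nzstrings n" using nz_nonempty[OF assms] by auto
  have "lpnorm p (nzstrings n) (M z) \<le> Max ((\<lambda>z. lpnorm p (nzstrings n) (M z)) ` nzstrings n)"
    using z finite_nzstrings by (intro Max_ge) auto
  hence "0 \<le> Max ((\<lambda>z. lpnorm p (nzstrings n) (M z)) ` nzstrings n)" using rows_nonneg by (meson order_trans)
  thus ?thesis using True by (simp add: group_norm_def Let_def)
qed (simp add: group_norm_def Let_def)

lemma nrm_G:
  fixes p :: real and M :: "nat list \<Rightarrow> nat list \<Rightarrow> complex"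
  assumes "n \<ge> 1" "q \<noteq> \<infinity>" "q > 0"
  defines "a \<equiv> \<lambda>z. lpnorm p (nzstrings n) (M z)"
  shows "nrm (real_of_ereal q) (nzstrings n) a = real (card (nzstrings n)) powr (1 / real_of_ereal q) * group_norm n p q M"
proof -
  define q' where "q' = real_of_ereal q"
  have q': "q' > 0" using assms unfolding q'_def by (cases q) auto
  define N where "N = real (card (nzstrings n))"
  have N: "N > 0" using nz_nonempty[OF assms(1)] finite_nzstrings unfolding N_def by (simp add: card_gt_0_iff)
  have "nrm q' (nzstrings n) a = (N * ((\<Sum>z\<in>nzstrings n. a z powr q') / N)) powr (1/q')"
    using N by (simp add: nrm_def)
  also have "\<dots> = N powr (1/q') * ((\<Sum>z\<in>nzstrings n. a z powr q') / N) powr (1/q')"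
  proof -
    have X0: "(\<Sum>z\<in>nzstrings n. a z powr q') \<ge> 0" by (rule sum_nonneg) simp
    have X: "(\<Sum>z\<in>nzstrings n. a z powr q') / N \<ge> 0" using N X0 by simp
    show ?thesis using powr_mult[of N "(\<Sum>z\<in>nzstrings n. a z powr q') / N" "1/q'"] N X by simp
  qed
  also have "((\<Sum>z\<in>nzstrings n. a z powr q') / N) powr (1/q') = group_norm n p q M"
    using assms(2) unfolding group_norm_def Let_def a_def q'_def N_def by simp
  finally show ?thesis unfolding q'_def N_def .
qed

lemma maxrow_bound:
  fixes p :: real and M :: "nat list \<Rightarrow> nat list \<Rightarrow> complex"
  assumes "n \<ge> 1" "q > 0"
  defines "a \<equiv> \<lambda>z. lpnorm p (nzstrings n) (M z)"
  shows "Max (a ` nzstrings n) \<le> real (card (nzstrings n)) powr (recip_e q) * group_norm n p q M"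
proof (cases "q = \<infinity>")
  case True
  have "card (nzstrings n) > 0" using nz_nonempty[OF assms(1)] finite_nzstrings by (simp add: card_gt_0_iff)
  thus ?thesis using True by (simp add: group_norm_def Let_def recip_e_def a_def)
next
  case False
  define q' where "q' = real_of_ereal q"
  have q': "q' > 0" using assms False unfolding q'_def by (cases q) auto
  obtain z0 where z0: "z0 \<in> nzstrings n" "Max (a ` nzstrings n) = a z0"
    using nz_nonempty[OF assms(1)] finite_nzstrings by (metis (no_types, lifting) Max_in finite_imageI image_iff image_is_empty)
  have "a z0 \<le> nrm q' (nzstrings n) a"
    by (rule comp_le_nrm) (use z0 q' finite_nzstrings in \<open>auto simp: a_def rows_nonneg\<close>)
  also have "\<dots> = real (card (nzstrings n)) powr (1 / q') * group_norm n p q M"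
    unfolding q'_def a_def by (rule nrm_G) (use assms False in auto)
  finally show ?thesis using z0 False unfolding recip_e_def q'_def by simp
qed

lemma nrmrow_bound:
  fixes p :: real and M :: "nat list \<Rightarrow> nat list \<Rightarrow> complex"
  assumes "n \<ge> 1" "q > 0" "r > 0"
  defines "a \<equiv> \<lambda>z. lpnorm p (nzstrings n) (M z)"
  shows "nrm r (nzstrings n) a \<le> real (card (nzstrings n)) powr (max (1/r) (recip_e q)) * group_norm n p q M"
proof -
  define N where "N = real (card (nzstrings n))"
  have N: "N \<ge> 1" using nz_nonempty[OF assms(1)] finite_nzstrings unfolding N_def
    by (metis One_nat_def Suc_leI card_gt_0_iff of_nat_1 of_nat_le_iff)
  have G: "group_norm n p q M \<ge> 0" using group_norm_nonneg[OF assms(1)] .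
  show ?thesis
  proof (cases "q = \<infinity>")
    case True
    have "nrm r (nzstrings n) a \<le> N powr (1/r) * Max (a ` nzstrings n)"
      unfolding N_def by (rule nrm_le_const) (use assms finite_nzstrings in \<open>auto simp: a_def rows_nonneg\<close>)
    also have "Max (a ` nzstrings n) = group_norm n p q M" using True by (simp add: group_norm_def Let_def a_def)
    also have "max (1/r) (recip_e q) = 1/r" using True assms by (simp add: recip_e_def)
    ultimately show ?thesis unfolding N_def by simp
  next
    case False
    define q' where "q' = real_of_ereal q"
    have q': "q' > 0" using assms False unfolding q'_def by (cases q) auto
    have rq: "recip_e q = 1/q'" using False unfolding recip_e_def q'_def by simp
    have nG: "nrm q' (nzstrings n) a = N powr (1/q') * group_norm n p q M"
      unfolding q'_def a_def N_def by (rule nrm_G) (use assms False in auto)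
    show ?thesis
    proof (cases "r \<le> q'")
      case True
      have "nrm r (nzstrings n) a \<le> N powr (1/r - 1/q') * nrm q' (nzstrings n) a"
        unfolding N_def by (rule power_mean_nrm) (use True assms finite_nzstrings in \<open>auto simp: a_def rows_nonneg\<close>)
      also have "\<dots> = N powr (1/r - 1/q' + 1/q') * group_norm n p q M"
        using N unfolding nG by (simp add: powr_add[symmetric])
      also have "max (1/r) (recip_e q) = 1/r - 1/q' + 1/q'"
      proof -
        have "1/q' \<le> 1/r" using True assms q' by (intro divide_left_mono) auto
        thus ?thesis using rq by simp
      qed
      ultimately show ?thesis unfolding N_def by simp
    next
      case False
      have "nrm r (nzstrings n) a \<le> nrm q' (nzstrings n) a"
        by (rule nrm_mono_exp) (use False q' finite_nzstrings in \<open>auto simp: a_def rows_nonneg\<close>)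
      also have "max (1/r) (recip_e q) = 1/q'"
      proof -
        have "1/r \<le> 1/q'" using False assms q' by (intro divide_left_mono) auto
        thus ?thesis using rq by simp
      qed
      ultimately show ?thesis using nG unfolding N_def by simp
    qed
  qed
qed

lemma layer_norm:
  assumes n: "n \<ge> 1" and p: "p \<ge> 1" and q: "q > 0"
  shows "lpnorm_e (pstar p) (nzstrings n) (step n \<Phi> v)
     \<le> real (card (nzstrings n)) powr (max (recip_e (pstar p)) (recip_e q)) * group_norm n p q (repM n \<Phi>)
        * lpnorm_e (pstar p) (nzstrings n) v"
proof -
  define S where "S = nzstrings n"
  have S: "finite S" "S \<noteq> {}" using finite_nzstrings nz_nonempty[OF n] unfolding S_def by auto
  define a where "a z = lpnorm p S (repM n \<Phi> z)" for z
  define V where "V = lpnorm_e (pstar p) S v"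
  have V: "V \<ge> 0" unfolding V_def using lpnorm_e_nonneg[OF S] .
  have a0: "a z \<ge> 0" for z unfolding a_def by (rule rows_nonneg)
  have row: "cmod (step n \<Phi> v z) \<le> a z * V" for z
    unfolding step_def a_def V_def S_def[symmetric] by (rule holder_e[OF S p])
  have G: "group_norm n p q (repM n \<Phi>) \<ge> 0" using group_norm_nonneg[OF n] .
  show ?thesis
  proof (cases "p = 1")
    case True
    hence ps: "pstar p = \<infinity>" by (simp add: pstar_def)
    have "lpnorm_e (pstar p) S (step n \<Phi> v) = Max ((\<lambda>z. cmod (step n \<Phi> v z)) ` S)"
      using ps by (simp add: lpnorm_e_def)
    also have "\<dots> \<le> Max (a ` S) * V"
    proof (subst Max_le_iff)
      show "finite ((\<lambda>z. cmod (step n \<Phi> v z)) ` S)" "(\<lambda>z. cmod (step n \<Phi> v z)) ` S \<noteq> {}" using S by auto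
      show "\<forall>x\<in>(\<lambda>z. cmod (step n \<Phi> v z)) ` S. x \<le> Max (a ` S) * V"
      proof
        fix x assume "x \<in> (\<lambda>z. cmod (step n \<Phi> v z)) ` S"
        then obtain z where z: "z \<in> S" "x = cmod (step n \<Phi> v z)" by auto
        have "a z \<le> Max (a ` S)" using S z by (intro Max_ge) auto
        hence "a z * V \<le> Max (a ` S) * V" using V by (rule mult_right_mono)
        thus "x \<le> Max (a ` S) * V" using row[of z] z by simp
      qed
    qed
    also have "\<dots> \<le> (real (card S) powr (recip_e q) * group_norm n p q (repM n \<Phi>)) * V"
      using V maxrow_bound[OF n q, of p "repM n \<Phi>"] unfolding a_def S_def by (intro mult_right_mono) auto
    also have "max (recip_e (pstar p)) (recip_e q) = recip_e q"
      using ps recip_e_nonneg[OF q] by (simp add: recip_e_def)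
    ultimately show ?thesis unfolding S_def V_def by simp
  next
    case False
    hence p1: "p > 1" using p by simp
    define r where "r = p / (p - 1)"
    have r: "r > 0" using p1 unfolding r_def by simp
    have ps: "pstar p = ereal r" using False unfolding pstar_def r_def by simp
    have "lpnorm_e (pstar p) S (step n \<Phi> v) = nrm r S (\<lambda>z. cmod (step n \<Phi> v z))"
      using ps by (simp add: lpnorm_e_def lpnorm_nrm)
    also have "\<dots> \<le> nrm r S (\<lambda>z. a z * V)"
      by (rule nrm_mono_comp) (use S r row in auto)
    also have "\<dots> = nrm r S a * V" by (rule nrm_scale) (use r V a0 in auto)
    also have "\<dots> \<le> (real (card S) powr (max (1/r) (recip_e q)) * group_norm n p q (repM n \<Phi>)) * V"
      using V nrmrow_bound[OF n q r, of p "repM n \<Phi>"] unfolding a_def S_def by (intro mult_right_mono) auto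
    also have "max (1/r) (recip_e q) = max (recip_e (pstar p)) (recip_e q)"
      using ps by (simp add: recip_e_def)
    finally show ?thesis unfolding S_def V_def by simp
  qed
qed

lemma mu_hat_Cons: "mu_hat n p q (\<Phi> # cs) = group_norm n p q (repM n \<Phi>) * mu_hat n p q cs"
  by (simp add: mu_hat_def)

lemma mu_hat_nonneg: "n \<ge> 1 \<Longrightarrow> mu_hat n p q cs \<ge> 0"
  by (induction cs) (auto simp: mu_hat_Cons group_norm_nonneg, simp add: mu_hat_def)

lemma chain_norm:
  assumes n: "n \<ge> 1" and p: "p \<ge> 1" and q: "q > 0"
  defines "mx \<equiv> max (recip_e (pstar p)) (recip_e q)"
  shows "lpnorm_e (pstar p) (nzstrings n) (iter n cs v)
     \<le> real (card (nzstrings n)) powr (real (length cs) * mx) * mu_hat n p q cs * lpnorm_e (pstar p) (nzstrings n) v"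
proof (induction cs arbitrary: v)
  case Nil
  have "card (nzstrings n) > 0" using nz_nonempty[OF n] finite_nzstrings by (simp add: card_gt_0_iff)
  then show ?case by (simp add: mu_hat_def)
next
  case (Cons \<Phi> cs)
  define N where "N = real (card (nzstrings n))"
  have N: "N > 0" using nz_nonempty[OF n] finite_nzstrings unfolding N_def by (simp add: card_gt_0_iff)
  have "lpnorm_e (pstar p) (nzstrings n) (iter n (\<Phi> # cs) v)
      \<le> N powr (real (length cs) * mx) * mu_hat n p q cs * lpnorm_e (pstar p) (nzstrings n) (step n \<Phi> v)"
    using Cons.IH[of "step n \<Phi> v"] unfolding N_def by simp
  also have "\<dots> \<le> N powr (real (length cs) * mx) * mu_hat n p q cs *
      (N powr mx * group_norm n p q (repM n \<Phi>) * lpnorm_e (pstar p) (nzstrings n) v)"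
    using layer_norm[OF n p q, of \<Phi> v] mu_hat_nonneg[OF n] unfolding N_def mx_def
    by (intro mult_left_mono) auto
  also have "\<dots> = N powr (real (length cs) * mx + mx) * (group_norm n p q (repM n \<Phi>) * mu_hat n p q cs) * lpnorm_e (pstar p) (nzstrings n) v"
    using N by (simp add: powr_add mult_ac)
  finally show ?case unfolding N_def by (simp add: mu_hat_Cons distrib_right add.commute)
qed


definition depol :: "nat \<Rightarrow> complex mat \<Rightarrow> complex mat" where
  "depol n A = (mtrace A / 2^n) \<cdot>\<^sub>m 1\<^sub>m (2^n)"

lemma sum_add_split: "(\<Sum>i<A + (B::nat). F i) = (\<Sum>i<A. F i) + (\<Sum>j<B. F (A + j) :: 'a::comm_monoid_add)"
  by (induction B) (simp_all add: add.assoc)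

lemma sum_block: "(\<Sum>i<(k::nat) * D. F i) = (\<Sum>a<k. \<Sum>t<D. F (a * D + t) :: 'a::comm_monoid_add)"
proof (induction k)
  case 0 then show ?case by simp
next
  case (Suc k)
  have "(\<Sum>i<Suc k * D. F i) = (\<Sum>i<k * D + D. F i)" by (simp add: add.commute)
  also have "\<dots> = (\<Sum>i<k * D. F i) + (\<Sum>t<D. F (k * D + t))" by (rule sum_add_split)
  finally show ?case using Suc by simp
qed

lemma mtrace_add: "A \<in> carrier_mat d d \<Longrightarrow> B \<in> carrier_mat d d \<Longrightarrow> mtrace (A + B) = mtrace A + mtrace B"
  by (simp add: mtrace_def sum.distrib)

lemma mtrace_smult: "A \<in> carrier_mat d d \<Longrightarrow> mtrace (c \<cdot>\<^sub>m A) = c * mtrace A"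
  by (simp add: mtrace_def sum_distrib_left)

lemma mtrace_one: "mtrace (1\<^sub>m d) = of_nat d" by (simp add: mtrace_def)

lemma depol_idx: "s < 2^n \<Longrightarrow> t < 2^n \<Longrightarrow> depol n A $$ (s,t) = (if s = t then mtrace A / 2^n else 0)"
  by (simp add: depol_def)

lemma block_trace: "mtrace (block d X a b) = (\<Sum>r<d. X $$ (a * d + r, b * d + r))"
  by (simp add: mtrace_def block_def)

lemma divmod_block: "t < D \<Longrightarrow> (a * D + t) div D = a" "t < D \<Longrightarrow> (a * D + t) mod D = (t::nat)"
  by auto

lemma block_lt: "a < k \<Longrightarrow> t < D \<Longrightarrow> a * D + t < k * (D::nat)"
proof -
  assume "a < k" "t < D"
  hence "a * D + t < a * D + D" by simp
  also have "\<dots> = Suc a * D" by simp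
  also have "\<dots> \<le> k * D" using \<open>a < k\<close> by (intro mult_right_mono) auto
  finally show ?thesis .
qed

lemma ampl_depol_idx:
  assumes "i < k * 2^n" "j < k * 2^n"
  shows "ampl (2^n) k (depol n) X $$ (i,j) =
     (if i mod 2^n = j mod 2^n then (\<Sum>r<2^n. X $$ ((i div 2^n) * 2^n + r, (j div 2^n) * 2^n + r)) / 2^n else 0)"
  using assms by (simp add: ampl_def depol_idx block_trace)

lemma ampl_depol_blk:
  assumes "a < k" "s < 2^n" "b < k" "t < 2^n"
  shows "ampl (2^n) k (depol n) X $$ (a * 2^n + s, b * 2^n + t) =
     (if s = t then (\<Sum>r<2^n. X $$ (a * 2^n + r, b * 2^n + r)) / 2^n else 0)"
  using assms by (simp add: ampl_depol_idx block_lt)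

lemma depol_cp:
  assumes psdX: "psd (k * 2^n) X"
  shows "psd (k * 2^n) (ampl (2^n) k (depol n) X)"
proof -
  define D :: nat where "D = 2^n"
  define K where "K = k * D"
  define Y where "Y = ampl D k (depol n) X"
  have D: "D > 0" unfolding D_def by simp
  have Xh: "X $$ (p,q) = cnj (X $$ (q,p))" if "p < K" "q < K" for p q
    using psdX that unfolding psd_def hermitian_def K_def D_def by blast
  have Xq: "0 \<le> Re (\<Sum>i<K. \<Sum>j<K. cnj (w i) * X $$ (i,j) * w j)" for w
    using psdX unfolding psd_def K_def D_def by blast
  have Yc: "Y \<in> carrier_mat K K" unfolding Y_def K_def by (simp add: ampl_def)
  have Yb: "Y $$ (a * D + s, b * D + t) = (if s = t then (\<Sum>r<D. X $$ (a * D + r, b * D + r)) / 2^n else 0)"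
    if "a < k" "s < D" "b < k" "t < D" for a s b t
    using ampl_depol_blk[of a k s n b t X] that unfolding Y_def D_def by simp
  have herm: "Y $$ (i,j) = cnj (Y $$ (j,i))" if "i < K" "j < K" for i j
  proof -
    have ik: "i div D < k" "j div D < k" using that D unfolding K_def by (auto simp: less_mult_imp_div_less)
    have l: "(i div D) * D + r < K" "(j div D) * D + r < K" if "r < D" for r
      using block_lt[OF ik(1) that] block_lt[OF ik(2) that] unfolding K_def by auto
    have "Y $$ (i,j) = (if i mod D = j mod D then (\<Sum>r<D. X $$ ((i div D) * D + r, (j div D) * D + r)) / 2^n else 0)"
      using ampl_depol_idx[of i k n j X] that unfolding Y_def K_def D_def by simp
    moreover have "Y $$ (j,i) = (if j mod D = i mod D then (\<Sum>r<D. X $$ ((j div D) * D + r, (i div D) * D + r)) / 2^n else 0)"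
      using ampl_depol_idx[of j k n i X] that unfolding Y_def K_def D_def by simp
    moreover have "cnj (\<Sum>r<D. X $$ ((j div D) * D + r, (i div D) * D + r)) = (\<Sum>r<D. X $$ ((i div D) * D + r, (j div D) * D + r))"
      unfolding cnj_sum by (intro sum.cong refl) (metis Xh l complex_cnj_cnj lessThan_iff)
    ultimately show ?thesis by simp
  qed
  define T where "T a b = (\<Sum>r<D. X $$ (a * D + r, b * D + r))" for a b
  define w where "w v s r i = (if i mod D = r then v ((i div D) * D + s) else 0)" for v :: "nat \<Rightarrow> complex" and s r i
  have quad: "0 \<le> Re (\<Sum>i<K. \<Sum>j<K. cnj (v i) * Y $$ (i,j) * v j)" for v
  proof -
    have "(\<Sum>i<K. \<Sum>j<K. cnj (v i) * Y $$ (i,j) * v j)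
        = (\<Sum>a<k. \<Sum>s<D. \<Sum>b<k. \<Sum>t<D. cnj (v (a*D+s)) * Y $$ (a*D+s, b*D+t) * v (b*D+t))"
      unfolding K_def sum_block ..
    also have "\<dots> = (\<Sum>a<k. \<Sum>s<D. \<Sum>b<k. \<Sum>t<D. if t = s then cnj (v (a*D+s)) * (T a b / 2^n) * v (b*D+s) else 0)"
      by (intro sum.cong refl) (auto simp: Yb T_def)
    also have "\<dots> = (\<Sum>a<k. \<Sum>s<D. \<Sum>b<k. cnj (v (a*D+s)) * (T a b / 2^n) * v (b*D+s))"
      by (intro sum.cong refl) (simp add: sum.delta)
    also have "\<dots> = (\<Sum>a<k. \<Sum>s<D. \<Sum>b<k. \<Sum>r<D. cnj (v (a*D+s)) * X $$ (a * D + r, b * D + r) * v (b*D+s) / 2^n)"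
      unfolding T_def by (simp add: sum_distrib_left sum_distrib_right sum_divide_distrib)
    also have "\<dots> = (\<Sum>s<D. \<Sum>a<k. \<Sum>b<k. \<Sum>r<D. cnj (v (a*D+s)) * X $$ (a * D + r, b * D + r) * v (b*D+s) / 2^n)"
      by (rule sum.swap)
    also have "\<dots> = (\<Sum>s<D. \<Sum>a<k. \<Sum>r<D. \<Sum>b<k. cnj (v (a*D+s)) * X $$ (a * D + r, b * D + r) * v (b*D+s) / 2^n)"
      by (intro sum.cong refl sum.swap)
    also have "\<dots> = (\<Sum>s<D. \<Sum>r<D. \<Sum>a<k. \<Sum>b<k. cnj (v (a*D+s)) * X $$ (a * D + r, b * D + r) * v (b*D+s) / 2^n)"
      by (intro sum.cong refl sum.swap)
    also have "\<dots> = (\<Sum>s<D. \<Sum>r<D. (\<Sum>i<K. \<Sum>j<K. cnj (w v s r i) * X $$ (i,j) * w v s r j) / 2^n)"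
    proof (intro sum.cong refl)
      fix s r assume s: "s \<in> {..<D}" and r: "r \<in> {..<D}"
      have "(\<Sum>i<K. \<Sum>j<K. cnj (w v s r i) * X $$ (i,j) * w v s r j)
         = (\<Sum>a<k. \<Sum>s'<D. \<Sum>b<k. \<Sum>t<D. cnj (w v s r (a*D+s')) * X $$ (a*D+s', b*D+t) * w v s r (b*D+t))"
        unfolding K_def sum_block ..
      also have "\<dots> = (\<Sum>a<k. \<Sum>s'<D. \<Sum>b<k. \<Sum>t<D. if t = r then (if s' = r then cnj (v (a*D+s)) * X $$ (a*D+r, b*D+r) * v (b*D+s) else 0) else 0)"
        by (intro sum.cong refl) (auto simp: w_def)
      also have "\<dots> = (\<Sum>a<k. \<Sum>s'<D. \<Sum>b<k. if s' = r then cnj (v (a*D+s)) * X $$ (a*D+r, b*D+r) * v (b*D+s) else 0)"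
        using r by (intro sum.cong refl) (simp add: sum.delta)
      also have "\<dots> = (\<Sum>a<k. \<Sum>s'<D. if s' = r then (\<Sum>b<k. cnj (v (a*D+s)) * X $$ (a*D+r, b*D+r) * v (b*D+s)) else 0)"
        by (intro sum.cong refl) simp
      also have "\<dots> = (\<Sum>a<k. \<Sum>b<k. cnj (v (a*D+s)) * X $$ (a*D+r, b*D+r) * v (b*D+s))"
        using r by (intro sum.cong[OF refl]) (simp add: sum.delta)
      finally show "(\<Sum>a<k. \<Sum>b<k. cnj (v (a*D+s)) * X $$ (a * D + r, b * D + r) * v (b*D+s) / 2^n)
          = (\<Sum>i<K. \<Sum>j<K. cnj (w v s r i) * X $$ (i,j) * w v s r j) / 2^n"
        by (simp add: sum_divide_distrib)
    qed
    finally have eq: "(\<Sum>i<K. \<Sum>j<K. cnj (v i) * Y $$ (i,j) * v j)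
       = (\<Sum>s<D. \<Sum>r<D. (\<Sum>i<K. \<Sum>j<K. cnj (w v s r i) * X $$ (i,j) * w v s r j) / 2^n)" .
    have "Re (\<Sum>i<K. \<Sum>j<K. cnj (v i) * Y $$ (i,j) * v j)
        = (\<Sum>s<D. \<Sum>r<D. Re (\<Sum>i<K. \<Sum>j<K. cnj (w v s r i) * X $$ (i,j) * w v s r j) / 2^n)"
      unfolding eq by (simp add: Re_divide_numeral Re_sum)
    also have "\<dots> \<ge> 0" using Xq by (intro sum_nonneg divide_nonneg_pos) auto
    finally show ?thesis .
  qed
  show ?thesis unfolding psd_def hermitian_def
    using Yc herm quad unfolding Y_def K_def D_def by blast
qed

lemma depol_car: "depol n A \<in> carrier_mat (2^n) (2^n)" by (simp add: depol_def)

lemma depol_unital: "unital_channel n (depol n)"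
proof -
  have add: "depol n (A + B) = depol n A + depol n B"
    if "A \<in> carrier_mat (2^n) (2^n)" "B \<in> carrier_mat (2^n) (2^n)" for A B
    by (rule eq_matI) (use that in \<open>auto simp: depol_def mtrace_add[OF that] add_divide_distrib\<close>)
  have sm: "depol n (c \<cdot>\<^sub>m A) = c \<cdot>\<^sub>m depol n A" if "A \<in> carrier_mat (2^n) (2^n)" for A c
    by (rule eq_matI) (use that in \<open>auto simp: depol_def mtrace_smult[OF that]\<close>)
  have tr: "mtrace (depol n A) = mtrace A" for A
    unfolding depol_def by (subst mtrace_smult[of _ "2^n"]) (auto simp: mtrace_one)
  have cp: "\<forall>k>0. \<forall>X. psd (k * 2^n) X \<longrightarrow> psd (k * 2^n) (ampl (2^n) k (depol n) X)"
    using depol_cp by blast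
  have un: "depol n (1\<^sub>m (2^n)) = 1\<^sub>m (2^n)"
    unfolding depol_def mtrace_one by (rule eq_matI) auto
  show ?thesis unfolding unital_channel_def quantum_channel_def Let_def
    using add sm tr cp un depol_car by auto
qed

lemma repM_depol: "x \<in> nzstrings n \<Longrightarrow> repM n (depol n) z x = 0"
proof -
  assume x: "x \<in> nzstrings n"
  have "depol n (pauli n x) = 0 \<cdot>\<^sub>m 1\<^sub>m (2^n)" unfolding depol_def using pauli_trace[OF x] by simp
  also have "\<dots> = 0\<^sub>m (2^n) (2^n)" by (rule eq_matI) auto
  finally show ?thesis unfolding repM_def by (simp add: mtrace_def)
qed

lemma group_norm_depol: assumes "n \<ge> 1" shows "group_norm n p q (repM n (depol n)) = 0"
proof -
  have r: "lpnorm p (nzstrings n) (repM n (depol n) z) = 0" for z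
    unfolding lpnorm_def by (simp add: repM_depol)
  show ?thesis unfolding group_norm_def Let_def r
  proof -
    have "(\<lambda>z. 0::real) ` nzstrings n = {0}" using nz_nonempty[OF assms] by auto
    thus "(if q = \<infinity> then MAX z\<in>nzstrings n. 0
     else ((\<Sum>z\<in>nzstrings n. 0 powr real_of_ereal q) / real (card (nzstrings n))) powr (1 / real_of_ereal q)) = 0"
      by simp
  qed
qed


lemma pure_car: "pure_state n R \<Longrightarrow> R \<in> carrier_mat (2^n) (2^n)"
  by (auto simp: pure_state_def)

lemma sample_bound:
  assumes n: "n \<ge> 1" and p: "p \<ge> 1" and q: "q > 0"
    and H: "hermitian (2 ^ n) H" and tH: "mtrace H = 0"
    and \<rho>: "\<forall>x. pure_state n (\<rho> x)" and cs: "cs \<in> circuits n l p q \<mu>"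
  shows "\<bar>\<Sum>i<m. e ! i * f_circ \<rho> H cs (xs ! i)\<bar>
    \<le> \<mu> * real (card (nzstrings n)) powr (real l * max (recip_e (pstar p)) (recip_e q))
       * lpnorm p (nzstrings n) (\<lambda>z. mtrace (pauli n z * H))
       * lpnorm_e (pstar p) (nzstrings n) (\<lambda>z. \<Sum>i<m. of_real (e ! i) * fI_hat n (\<rho> (xs ! i)) z)"
proof -
  define S where "S = nzstrings n"
  have S: "finite S" "S \<noteq> {}" using finite_nzstrings nz_nonempty[OF n] unfolding S_def by auto
  define \<alpha> where "\<alpha> z = mtrace (pauli n z * H)" for z
  have csl: "length cs = l" and csu: "\<forall>\<Phi>\<in>set cs. unital_channel n \<Phi>" and csm: "mu_hat n p q cs \<le> \<mu>"
    using cs by (auto simp: circuits_def)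
  have Hc: "H \<in> carrier_mat (2^n) (2^n)" using H by (simp add: hermitian_def)
  have fc: "f_circ \<rho> H cs x = Re (\<Sum>z\<in>S. \<alpha> z * iter n cs (fI_hat n (\<rho> x)) z)" for x
  proof -
    have rc: "\<rho> x \<in> carrier_mat (2^n) (2^n)" using \<rho> pure_car by blast
    have Cc: "apply_circuit cs (\<rho> x) \<in> carrier_mat (2^n) (2^n)" by (rule circuit_car[OF csu rc])
    have "f_circ \<rho> H cs x = Re (\<Sum>z\<in>S. fI_hat n (apply_circuit cs (\<rho> x)) z * \<alpha> z)"
      unfolding f_circ_def trace_H[OF Cc Hc tH] S_def \<alpha>_def ..
    also have "\<dots> = Re (\<Sum>z\<in>S. \<alpha> z * iter n cs (fI_hat n (\<rho> x)) z)"
      using circuit_vec[OF csu rc] unfolding S_def by (intro arg_cong[where f=Re] sum.cong refl) (auto simp: mult.commute)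
    finally show ?thesis .
  qed
  define u where "u z = (\<Sum>i<m. of_real (e ! i) * fI_hat n (\<rho> (xs ! i)) z)" for z
  have "(\<Sum>i<m. e ! i * f_circ \<rho> H cs (xs ! i)) = Re (\<Sum>i<m. of_real (e ! i) * (\<Sum>z\<in>S. \<alpha> z * iter n cs (fI_hat n (\<rho> (xs ! i))) z))"
    unfolding fc Re_sum by simp
  also have "\<dots> = Re (\<Sum>z\<in>S. \<alpha> z * (\<Sum>i<m. of_real (e ! i) * iter n cs (fI_hat n (\<rho> (xs ! i))) z))"
    by (simp add: sum_distrib_left sum.swap[of _ S] mult_ac)
  also have "(\<lambda>z. \<Sum>i<m. of_real (e ! i) * iter n cs (fI_hat n (\<rho> (xs ! i))) z) = iter n cs u"
    unfolding u_def by (rule iter_lin[symmetric])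
  finally have eq: "(\<Sum>i<m. e ! i * f_circ \<rho> H cs (xs ! i)) = Re (\<Sum>z\<in>S. \<alpha> z * iter n cs u z)" .
  define N where "N = real (card S)"
  define mx where "mx = max (recip_e (pstar p)) (recip_e q)"
  have N: "N > 0" using S unfolding N_def by (simp add: card_gt_0_iff)
  have "\<bar>\<Sum>i<m. e ! i * f_circ \<rho> H cs (xs ! i)\<bar> \<le> cmod (\<Sum>z\<in>S. \<alpha> z * iter n cs u z)"
    unfolding eq by (rule abs_Re_le_cmod)
  also have "\<dots> \<le> lpnorm p S \<alpha> * lpnorm_e (pstar p) S (iter n cs u)"
    by (rule holder_e[OF S p])
  also have "\<dots> \<le> lpnorm p S \<alpha> * (N powr (real (length cs) * mx) * mu_hat n p q cs * lpnorm_e (pstar p) S u)"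
    using chain_norm[OF n p q, of cs u] unfolding S_def N_def mx_def
    by (intro mult_left_mono) (auto simp: lpnorm_def)
  also have "\<dots> \<le> lpnorm p S \<alpha> * (N powr (real (length cs) * mx) * \<mu> * lpnorm_e (pstar p) S u)"
    using csm lpnorm_e_nonneg[OF S, of "pstar p" u]
    by (intro mult_left_mono mult_right_mono) (auto simp: lpnorm_def)
  finally show ?thesis unfolding csl S_def N_def mx_def \<alpha>_def u_def by (simp add: mult_ac)
qed


lemma lpnorm_e_real:
  "lpnorm_e r S (\<lambda>z. complex_of_real (f z)) =
     (if r = \<infinity> then Max ((\<lambda>z. \<bar>f z\<bar>) ` S) else nrm (real_of_ereal r) S (\<lambda>z. \<bar>f z\<bar>))"
  by (simp add: lpnorm_e_def lpnorm_nrm)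

lemma Nc_root_bound:
  assumes n: "n \<ge> 1"
  shows "real (card (nzstrings n)) powr (1 / real (4 * n)) \<le> sqrt 2"
proof -
  have N1: "real (card (nzstrings n)) \<ge> 1" using nz_nonempty[OF n] finite_nzstrings
    by (metis One_nat_def Suc_leI card_gt_0_iff of_nat_1 of_nat_le_iff)
  have "real (card (nzstrings n)) \<le> 4 ^ n" using card_nzstrings[of n] by simp
  hence "real (card (nzstrings n)) powr (1 / real (4 * n)) \<le> (4 ^ n) powr (1 / real (4 * n))"
    using N1 by (intro powr_mono2) auto
  also have "(4 ^ n :: real) = 4 powr (real n)" by (simp add: powr_realpow)
  also have "(4 powr (real n)) powr (1 / real (4 * n)) = (4::real) powr (1/4)"
    using n by (simp add: powr_powr)
  also have "(4::real) powr (1/4) = sqrt 2"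
  proof -
    have "(4::real) powr (1/4) = 2 powr (1/2)" using powr_powr[of "2::real" 2 "1/4"] by simp
    also have "\<dots> = sqrt 2" by (simp add: powr_half_sqrt)
    finally show ?thesis .
  qed
  finally show ?thesis .
qed

lemma big_case:
  fixes w :: "nat \<Rightarrow> nat list \<Rightarrow> real"
  assumes n: "n \<ge> 1" and m: "m \<ge> 1"
    and r: "r = \<infinity> \<or> (\<exists>r'. r = ereal r' \<and> r' > 8 * real n)"
    and wB: "\<forall>i<m. lpnorm_e r (nzstrings n) (\<lambda>z. complex_of_real (w i z)) \<le> B"
  shows "(\<Sum>e\<in>signs m. lpnorm_e r (nzstrings n) (\<lambda>z. complex_of_real (\<Sum>i<m. e ! i * w i z)))
      \<le> 2 ^ m * sqrt (8 * real n) * sqrt (real m) * B"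
proof -
  define S where "S = nzstrings n"
  have S: "finite S" "S \<noteq> {}" using finite_nzstrings nz_nonempty[OF n] unfolding S_def by auto
  define s :: real where "s = real (4 * n)"
  have s: "s \<ge> 2" using n unfolding s_def by simp
  have comp: "\<bar>f z\<bar> \<le> lpnorm_e r S (\<lambda>z. complex_of_real (f z))" if "z \<in> S" for f z
  proof (cases "r = \<infinity>")
    case True then show ?thesis using S that by (simp add: lpnorm_e_real)
  next
    case False
    then obtain r' where r': "r = ereal r'" "r' > 8 * real n" using r by auto
    have "r' > 0" using r' n by simp
    thus ?thesis using r' comp_le_nrm[OF S(1) that _ \<open>r' > 0\<close>, of "\<lambda>z. \<bar>f z\<bar>"] by (simp add: lpnorm_e_real)
  qed
  have toS: "lpnorm_e r S (\<lambda>z. complex_of_real (f z)) \<le> nrm s S (\<lambda>z. \<bar>f z\<bar>)" for f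
  proof (cases "r = \<infinity>")
    case True
    obtain z0 where z0: "z0 \<in> S" "Max ((\<lambda>z. \<bar>f z\<bar>) ` S) = \<bar>f z0\<bar>"
      using S by (metis (no_types, lifting) Max_in finite_imageI image_iff image_is_empty)
    have "\<bar>f z0\<bar> \<le> nrm s S (\<lambda>z. \<bar>f z\<bar>)" by (rule comp_le_nrm) (use S z0 s in auto)
    thus ?thesis using True z0 by (simp add: lpnorm_e_real)
  next
    case False
    then obtain r' where r': "r = ereal r'" "r' > 8 * real n" using r by auto
    have "nrm r' S (\<lambda>z. \<bar>f z\<bar>) \<le> nrm s S (\<lambda>z. \<bar>f z\<bar>)"
      by (rule nrm_mono_exp) (use S s r' in \<open>auto simp: s_def\<close>)
    thus ?thesis using r' by (simp add: lpnorm_e_real)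
  qed
  define N where "N = real (card S)"
  have wB': "\<forall>i<m. nrm s S (\<lambda>z. \<bar>w i z\<bar>) \<le> N powr (1/s) * B"
  proof (intro allI impI)
    fix i assume i: "i < m"
    show "nrm s S (\<lambda>z. \<bar>w i z\<bar>) \<le> N powr (1/s) * B"
    proof (unfold N_def, rule nrm_le_const)
      show "\<forall>z\<in>S. 0 \<le> \<bar>w i z\<bar> \<and> \<bar>w i z\<bar> \<le> B"
        using comp[of _ "w i"] wB i unfolding S_def by (meson abs_ge_zero order_trans)
    qed (use S s in auto)
  qed
  have "(\<Sum>e\<in>signs m. lpnorm_e r S (\<lambda>z. complex_of_real (\<Sum>i<m. e ! i * w i z)))
      \<le> (\<Sum>e\<in>signs m. nrm s S (\<lambda>z. \<bar>\<Sum>i<m. e ! i * w i z\<bar>))"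
    by (intro sum_mono toS)
  also have "\<dots> \<le> 2 ^ m * sqrt s * sqrt (real m) * (N powr (1/s) * B)"
    by (rule vec_khintchine[OF S(1) s m wB'])
  also have "\<dots> \<le> 2 ^ m * sqrt (8 * real n) * sqrt (real m) * B"
  proof -
    have B: "B \<ge> 0"
    proof -
      obtain z where "z \<in> S" using S by auto
      hence "\<bar>w 0 z\<bar> \<le> B" using comp[of z "w 0"] wB m unfolding S_def by force
      thus ?thesis by simp
    qed
    have "sqrt s * N powr (1/s) \<le> sqrt s * sqrt 2"
      using Nc_root_bound[OF n] unfolding N_def S_def s_def by (intro mult_left_mono) auto
    also have "sqrt s * sqrt 2 = sqrt (8 * real n)" unfolding s_def by (simp flip: real_sqrt_mult)
    finally have "sqrt s * N powr (1/s) \<le> sqrt (8 * real n)" .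
    hence "2 ^ m * sqrt (real m) * B * (sqrt s * N powr (1/s)) \<le> 2 ^ m * sqrt (real m) * B * sqrt (8 * real n)"
      using B by (intro mult_left_mono) auto
    thus ?thesis by (simp add: mult_ac)
  qed
  finally show ?thesis unfolding S_def .
qed

lemma circuits_nonempty:
  assumes "l \<ge> 1" "n \<ge> 1" "\<mu> > 0"
  shows "replicate l (depol n) \<in> circuits n l p q \<mu>"
proof -
  have "mu_hat n p q (replicate l (depol n)) = 0"
    using assms by (simp add: mu_hat_def group_norm_depol)
  thus ?thesis using assms depol_unital by (simp add: circuits_def)
qed

lemma rad_le:
  assumes n: "n \<ge> 1" and p: "p \<ge> 1" and q: "q > 0" and l: "l \<ge> 1" and \<mu>: "\<mu> > 0"
    and H: "hermitian (2 ^ n) H" and tH: "mtrace H = 0"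
    and \<rho>: "\<forall>x. pure_state n (\<rho> x)" and m: "length xs \<ge> 1"
  defines "C \<equiv> \<mu> * real (card (nzstrings n)) powr (real l * max (recip_e (pstar p)) (recip_e q))
       * lpnorm p (nzstrings n) (\<lambda>z. mtrace (pauli n z * H))"
  shows "rademacher xs (fclass n l p q \<mu> \<rho> H) \<le> C / (real (length xs) * 2 ^ length xs) *
     (\<Sum>e\<in>signs (length xs). lpnorm_e (pstar p) (nzstrings n) (\<lambda>z. \<Sum>i<length xs. of_real (e ! i) * fI_hat n (\<rho> (xs ! i)) z))"
proof -
  define m where "m = length xs"
  define Y where "Y e = lpnorm_e (pstar p) (nzstrings n) (\<lambda>z. \<Sum>i<m. of_real (e ! i) * fI_hat n (\<rho> (xs ! i)) z)" for e
  have sup: "Sup {\<bar>\<Sum>i<m. e ! i * g (xs ! i)\<bar> |g. g \<in> fclass n l p q \<mu> \<rho> H} \<le> C * Y e" for e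
  proof (rule cSup_least)
    show "{\<bar>\<Sum>i<m. e ! i * g (xs ! i)\<bar> |g. g \<in> fclass n l p q \<mu> \<rho> H} \<noteq> {}"
      using circuits_nonempty[OF l n \<mu>] unfolding fclass_def by blast
    fix x assume "x \<in> {\<bar>\<Sum>i<m. e ! i * g (xs ! i)\<bar> |g. g \<in> fclass n l p q \<mu> \<rho> H}"
    then obtain cs where cs: "cs \<in> circuits n l p q \<mu>" and x: "x = \<bar>\<Sum>i<m. e ! i * f_circ \<rho> H cs (xs ! i)\<bar>"
      unfolding fclass_def by blast
    show "x \<le> C * Y e" unfolding x C_def Y_def by (rule sample_bound[OF n p q H tH \<rho> cs])
  qed
  have "rademacher xs (fclass n l p q \<mu> \<rho> H)
      = (\<Sum>e\<in>signs m. 1 / real m * Sup {\<bar>\<Sum>i<m. e ! i * g (xs ! i)\<bar> |g. g \<in> fclass n l p q \<mu> \<rho> H}) / 2 ^ m"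
    unfolding rademacher_def m_def Let_def ..
  also have "\<dots> \<le> (\<Sum>e\<in>signs m. 1 / real m * (C * Y e)) / 2 ^ m"
    using m unfolding m_def by (intro divide_right_mono sum_mono mult_left_mono sup[unfolded m_def]) auto
  also have "\<dots> = C / (real m * 2 ^ m) * (\<Sum>e\<in>signs m. Y e)"
  proof -
    have "(\<Sum>e\<in>signs m. 1 / real m * (C * Y e)) = C / real m * (\<Sum>e\<in>signs m. Y e)"
      by (simp add: sum_distrib_left)
    thus ?thesis by simp
  qed
  finally show ?thesis unfolding m_def Y_def .
qed

theorem mainTheorem6:
  fixes n l :: nat and \<mu> p :: real and q :: ereal
    and H :: "complex mat" and \<rho> :: "'x \<Rightarrow> complex mat" and xs :: "'x list"
  assumes "l \<ge> 1" and "n \<ge> 1" and "\<mu> > 0" and "1 \<le> p" and "0 < q"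
    and "hermitian (2 ^ n) H" and "mtrace H = 0"
    and "\<forall>x. pure_state n (\<rho> x)"
    and "length xs \<ge> 1"
  defines "N \<equiv> (4::real) ^ n - 1"
    and "m \<equiv> real (length xs)"
    and "E \<equiv> real l * max (recip_e (pstar p)) (recip_e q)"
  shows "(p \<le> 2 \<longrightarrow>
           rademacher xs (fclass n l p q \<mu> \<rho> H)
             \<le> \<mu> * N powr E * (sqrt (real_of_ereal (min (pstar p) (ereal (8 * real n)))) / sqrt m)
               * K_hat n p \<rho> xs H)
       \<and> (2 < p \<longrightarrow>
           rademacher xs (fclass n l p q \<mu> \<rho> H)
             \<le> \<mu> * N powr E * (sqrt (real_of_ereal (pstar p)) / m powr (1 / p))
               * K_hat n p \<rho> xs H)"
proof -
  note n = assms(2) and p = assms(4) and q = assms(5) and l = assms(1) and \<mu> = assms(3)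
    and H = assms(6) and tH = assms(7) and \<rho> = assms(8) and mx = assms(9)
  define S where "S = nzstrings n"
  have S: "finite S" "S \<noteq> {}" using finite_nzstrings nz_nonempty[OF n] unfolding S_def by auto
  have NS: "N = real (card S)" unfolding N_def S_def card_nzstrings ..
  define len where "len = length xs"
  have len: "len \<ge> 1" using mx unfolding len_def .
  have mlen: "m = real len" unfolding m_def len_def ..
  define \<alpha>n where "\<alpha>n = lpnorm p S (\<lambda>z. mtrace (pauli n z * H))"
  define C where "C = \<mu> * N powr E * \<alpha>n"
  have C: "C \<ge> 0" unfolding C_def \<alpha>n_def using \<mu> by (simp add: lpnorm_def)
  define w where "w i z = Re (fI_hat n (\<rho> (xs ! i)) z)" for i z
  have fIw: "fI_hat n (\<rho> (xs ! i)) z = complex_of_real (w i z)" for i z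
    using fI_real[OF pure_herm[OF \<rho>[rule_format]]] unfolding w_def by (simp add: complex_eq_iff)
  define r where "r = pstar p"
  define B where "B = Max {lpnorm_e r S (fI_hat n (\<rho> (xs ! i))) | i. i < len}"
  have Bfin: "finite {lpnorm_e r S (fI_hat n (\<rho> (xs ! i))) | i. i < len}" by simp
  have wB: "\<forall>i<len. lpnorm_e r S (\<lambda>z. complex_of_real (w i z)) \<le> B"
  proof (intro allI impI)
    fix i assume "i < len"
    hence "lpnorm_e r S (fI_hat n (\<rho> (xs ! i))) \<le> B" unfolding B_def by (intro Max_ge[OF Bfin]) auto
    moreover have "fI_hat n (\<rho> (xs ! i)) = (\<lambda>z. complex_of_real (w i z))" using fIw by auto
    ultimately show "lpnorm_e r S (\<lambda>z. complex_of_real (w i z)) \<le> B" by simp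
  qed
  have B0: "B \<ge> 0" using wB len lpnorm_e_nonneg[OF S, of r "\<lambda>z. complex_of_real (w 0 z)"] by force
  have Khat: "K_hat n p \<rho> xs H = \<alpha>n * B"
    unfolding K_hat_def \<alpha>n_def B_def S_def r_def len_def ..
  define T where "T = (\<Sum>e\<in>signs len. lpnorm_e r S (\<lambda>z. complex_of_real (\<Sum>i<len. e ! i * w i z)))"
  have rad: "rademacher xs (fclass n l p q \<mu> \<rho> H) \<le> C / (m * 2 ^ len) * T"
  proof -
    have "rademacher xs (fclass n l p q \<mu> \<rho> H) \<le> C / (real len * 2 ^ len) *
      (\<Sum>e\<in>signs len. lpnorm_e (pstar p) S (\<lambda>z. \<Sum>i<len. of_real (e ! i) * fI_hat n (\<rho> (xs ! i)) z))"
      using rad_le[OF n p q l \<mu> H tH \<rho> mx] unfolding C_def NS E_def S_def len_def \<alpha>n_def by simp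
    also have "(\<lambda>e. lpnorm_e (pstar p) S (\<lambda>z. \<Sum>i<len. of_real (e ! i) * fI_hat n (\<rho> (xs ! i)) z))
       = (\<lambda>e. lpnorm_e r S (\<lambda>z. complex_of_real (\<Sum>i<len. e ! i * w i z)))"
      unfolding fIw r_def by simp
    finally show ?thesis unfolding T_def mlen .
  qed
  have m1: "m \<ge> 1" using len mlen by simp
  show ?thesis
  proof (intro conjI impI)
    assume p2: "p \<le> 2"
    define c where "c = real_of_ereal (min (pstar p) (ereal (8 * real n)))"
    have Tb: "T \<le> 2 ^ len * sqrt c * sqrt (real len) * B"
    proof (cases "r = \<infinity> \<or> (\<exists>r'. r = ereal r' \<and> r' > 8 * real n)")
      case True
      have c: "c = 8 * real n"
        using True unfolding c_def r_def by (auto simp: min_def)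
      show ?thesis unfolding T_def c S_def by (rule big_case[OF n len True wB[unfolded S_def]])
    next
      case False
      have p1: "p \<noteq> 1" using False unfolding r_def pstar_def by auto
      define r' where "r' = p / (p - 1)"
      have rr: "r = ereal r'" using p1 unfolding r_def pstar_def r'_def by simp
      have r'8: "r' \<le> 8 * real n" using False rr by auto
      have r'2: "r' \<ge> 2" using p p1 p2 unfolding r'_def by (simp add: field_simps)
      have c: "c = r'" using r'8 unfolding c_def r_def[symmetric] rr by (simp add: min_def)
      have wB': "\<forall>i<len. nrm r' S (\<lambda>z. \<bar>w i z\<bar>) \<le> B" using wB unfolding rr by (simp add: lpnorm_e_real)
      have "T = (\<Sum>e\<in>signs len. nrm r' S (\<lambda>z. \<bar>\<Sum>i<len. e ! i * w i z\<bar>))"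
        unfolding T_def rr lpnorm_e_real by simp
      also have "\<dots> \<le> 2 ^ len * sqrt r' * sqrt (real len) * B"
        by (rule vec_khintchine[OF S(1) r'2 len wB'])
      finally show ?thesis unfolding c .
    qed
    have "rademacher xs (fclass n l p q \<mu> \<rho> H) \<le> C / (m * 2 ^ len) * (2 ^ len * sqrt c * sqrt m * B)"
    proof -
      have "C / (m * 2 ^ len) \<ge> 0" using C m1 by simp
      from mult_left_mono[OF Tb this] have "C / (m * 2 ^ len) * T \<le> C / (m * 2 ^ len) * (2 ^ len * sqrt c * sqrt (real len) * B)" .
      thus ?thesis using rad unfolding mlen by linarith
    qed
    also have "\<dots> = C * (sqrt c / sqrt m) * B"
    proof -
      have "sqrt m * sqrt m = m" using m1 by simp
      thus ?thesis using m1 by (simp add: field_simps)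
    qed
    also have "\<dots> = \<mu> * N powr E * (sqrt c / sqrt m) * K_hat n p \<rho> xs H"
      unfolding Khat C_def by (simp add: mult_ac)
    finally show "rademacher xs (fclass n l p q \<mu> \<rho> H)
        \<le> \<mu> * N powr E * (sqrt (real_of_ereal (min (pstar p) (ereal (8 * real n)))) / sqrt m) * K_hat n p \<rho> xs H"
      unfolding c_def .
  next
    assume p2: "2 < p"
    define r' where "r' = p / (p - 1)"
    have p1: "p \<noteq> 1" using p2 by simp
    have rr: "r = ereal r'" using p1 unfolding r_def pstar_def r'_def by simp
    have r'1: "r' \<ge> 1" "r' \<le> 2" using p2 unfolding r'_def by (simp_all add: field_simps)
    have wB': "\<forall>i<len. nrm r' S (\<lambda>z. \<bar>w i z\<bar>) \<le> B" using wB unfolding rr by (simp add: lpnorm_e_real)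
    have "T = (\<Sum>e\<in>signs len. nrm r' S (\<lambda>z. \<bar>\<Sum>i<len. e ! i * w i z\<bar>))"
      unfolding T_def rr lpnorm_e_real by simp
    also have "\<dots> \<le> 2 ^ len * real len powr (1/r') * B"
      by (rule vec_rad_small[OF S(1) r'1 len wB'])
    finally have Tb: "T \<le> 2 ^ len * m powr (1/r') * B" unfolding mlen .
    have "rademacher xs (fclass n l p q \<mu> \<rho> H) \<le> C / (m * 2 ^ len) * (2 ^ len * m powr (1/r') * B)"
    proof -
      have "C / (m * 2 ^ len) \<ge> 0" using C m1 by simp
      from mult_left_mono[OF Tb this] show ?thesis using rad by linarith
    qed
    also have "\<dots> = C * (m powr (1/r') / m) * B"
      using m1 by (simp add: field_simps)
    also have "m powr (1/r') / m = 1 / m powr (1/p)"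
    proof -
      have e: "1/r' = 1 + (- (1/p))" using p2 unfolding r'_def by (simp add: field_simps)
      have "m powr (1/r') = m powr (1 + (- (1/p)))" unfolding e ..
      also have "\<dots> = m powr 1 * m powr (- (1/p))" by (rule powr_add)
      also have "\<dots> = m * m powr (- (1/p))" using m1 by simp
      finally have "m powr (1/r') = m * m powr (- (1/p))" .
      thus ?thesis using m1 by (simp add: powr_minus divide_inverse)
    qed
    also have "C * (1 / m powr (1/p)) * B \<le> C * (sqrt r' / m powr (1/p)) * B"
    proof -
      have "1 \<le> sqrt r'" using r'1 by simp
      hence "1 / m powr (1/p) \<le> sqrt r' / m powr (1/p)" using m1 by (intro divide_right_mono) auto
      thus ?thesis using C B0 by (intro mult_right_mono mult_left_mono) auto
    qed
    also have "\<dots> = \<mu> * N powr E * (sqrt r' / m powr (1/p)) * K_hat n p \<rho> xs H"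
      unfolding Khat C_def by (simp add: mult_ac)
    finally show "rademacher xs (fclass n l p q \<mu> \<rho> H)
        \<le> \<mu> * N powr E * (sqrt (real_of_ereal (pstar p)) / m powr (1 / p)) * K_hat n p \<rho> xs H"
      using rr unfolding r_def by simp
  qed
qed


end
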